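(* Let $\mathfrak{g}$ be the Lie algebra described in the context with the $G_2$-structure $\varphi=e^{127}+e^{347}+e^{567}+e^{135}-e^{146}-e^{236}-e^{245}$. If $\varphi$ is closed ($d\varphi=0$), is an eigenform ($\Delta\varphi=\lambda\varphi$ for some $\lambda\in\mathbb{R}$, where $\Delta$ is the Hodge Laplacian), and its torsion $2$-form $\tau_2=-\ast d\ast\varphi$ is $\tau_2=a\,e^{12}+b\,e^{34}+c\,e^{56}$ for some $a,b,c\in\mathbb{R}$ with $a+b+c=0$, then $\varphi$ is torsion-free, i.e. $\tau_2=0$.
   Context: $\mathfrak{g}$ is a $7$-dimensional Lie algebra with basis $\{e_1,\dots,e_7\}$, dual basis $\{e^i\}$, $e^{ij\dots}=e^i\wedge e^j\wedge\cdots$, bracket given by $A_1=\operatorname{ad}e_7|_{\operatorname{span}\{e_1,e_2\}}=\begin{pmatrix}x&z\\ y&w\end{pmatrix}$, $A=\operatorname{ad}e_7|_{\mathfrak{g}_1}$, $B=\operatorname{ad}e_1|_{\mathfrak{g}_1}$, $C=\operatorname{ad}e_2|_{\mathfrak{g}_1}$, with $\mathfrak{g}_1=\operatorname{span}\{e_3,\dots,e_6\}$ an abelian ideal, $\operatorname{span}\{e_1,e_2\}$ abelian, $\operatorname{span}\{e_7,e_1,e_2\}$ a subalgebra, $\operatorname{tr}B=\operatorname{tr}C=0$, $[A,B]=xB+yC$, $[A,C]=zB+wC$, $[B,C]=0$. $\varphi$ is viewed as a left-invariant $G_2$-structure on the simply connected Lie group with Lie algebra $\mathfrak{g}$; $\ast$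 and $\Delta=d d^*+d^* d$ are taken with respect to the metric and orientation induced by $\varphi$ (for which $\{e_i\}$ is oriented orthonormal). For closed $\varphi$, $\tau_2$ is the only nonzero torsion form. *)

theory Defs
  imports Complex_Main
begin

text \<open>A (mixed-degree) form is represented by its coefficient function: for an index set
I \<subseteq> {1..7}, alpha I is the coefficient of e^I = e^{i_1} \<and> ... \<and> e^{i_k}
(i_1 < ... < i_k).  Values on sets not contained in {1..7} are irrelevant and are
produced as 0 by all operations below.\<close>

type_synonym form = "nat set \<Rightarrow> real"

text \<open>Structure constants: lie_c ... i j k is the coefficient of e_k in [e_i, e_j].
A1 = ad e_7 on span{e_1,e_2} has columns (x,y), (z,w), i.e. [e_7,e_1] = x e_1 + y e_2,
[e_7,e_2] = z e_1 + w e_2.  A, B, C are the matrices of ad e_7, ad e_1, ad e_2 on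
g_1 = span{e_3,...,e_6}, indexed by {3..6}: M k j = coefficient of e_k in M e_j.\<close>

definition lie_c ::
  "real \<Rightarrow> real \<Rightarrow> real \<Rightarrow> real \<Rightarrow> (nat \<Rightarrow> nat \<Rightarrow> real) \<Rightarrow> (nat \<Rightarrow> nat \<Rightarrow> real) \<Rightarrow>
   (nat \<Rightarrow> nat \<Rightarrow> real) \<Rightarrow> nat \<Rightarrow> nat \<Rightarrow> nat \<Rightarrow> real" where
  "lie_c x y z w A B C i j k =
     (let g1 = {3..6::nat};
          base = (\<lambda>i j k.
             if i = 7 \<and> j = 1 then (if k = 1 then x else if k = 2 then y else 0)
             else if i = 7 \<and> j = 2 then (if k = 1 then z else if k = 2 then w else 0)
             else if i = 7 \<and> j \<in> g1 then (if k \<in> g1 then A k j else 0)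
             else if i = 1 \<and> j \<in> g1 then (if k \<in> g1 then B k j else 0)
             else if i = 2 \<and> j \<in> g1 then (if k \<in> g1 then C k j else 0)
             else 0)
      in base i j k - base j i k)"

text \<open>Evaluation alpha(e_m, e_{j_1}, ..., e_{j_r}) for J = {j_1 < ... < j_r},
with the convention e^{i_1...i_k}(e_{i_1},...,e_{i_k}) = 1.\<close>

definition ev_ins :: "form \<Rightarrow> nat \<Rightarrow> nat set \<Rightarrow> real" where
  "ev_ins \<alpha> m J = (if m \<in> J then 0
                   else (-1::real) ^ card {j \<in> J. j < m} * \<alpha> (insert m J))"

text \<open>Chevalley--Eilenberg differential (exterior derivative of left-invariant forms):
d alpha(X_0,...,X_k) = sum_{p<q} (-1)^{p+q} alpha([X_p,X_q], X_0,..^p..^q..,X_k).\<close>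

definition dform :: "(nat \<Rightarrow> nat \<Rightarrow> nat \<Rightarrow> real) \<Rightarrow> form \<Rightarrow> form" where
  "dform c \<alpha> I =
     (if I \<subseteq> {1..7} then
        (let L = sorted_list_of_set I in
          \<Sum>p<length L. \<Sum>q<length L.
            if p < q then (-1::real) ^ (p + q) *
               (\<Sum>m\<in>{1..7}. c (L ! p) (L ! q) m * ev_ins \<alpha> m (I - {L ! p, L ! q}))
            else 0)
      else 0)"

text \<open>Hodge star for the metric with {e_i} oriented orthonormal, volume form e^{1...7}:
* e^I = s e^{I^c} where e^I \<and> e^{I^c} = s e^{1...7}.\<close>

definition wedge_sign :: "nat set \<Rightarrow> nat set \<Rightarrow> real" where
  "wedge_sign I J = (-1::real) ^ card {(i, j). i \<in> I \<and> j \<in> J \<and> j < i}"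

definition hodge :: "form \<Rightarrow> form" where
  "hodge \<alpha> J = (if J \<subseteq> {1..7} then wedge_sign ({1..7} - J) J * \<alpha> ({1..7} - J) else 0)"

text \<open>Codifferential on a 7-dimensional Riemannian manifold: on k-forms
d^* = (-1)^{7(k+1)+1} * d * = (-1)^k * d *.  The component of d^* alpha of degree
card J comes from the degree (card J + 1) part of alpha.\<close>

definition codiff :: "(nat \<Rightarrow> nat \<Rightarrow> nat \<Rightarrow> real) \<Rightarrow> form \<Rightarrow> form" where
  "codiff c \<alpha> J = (-1::real) ^ (card J + 1) * hodge (dform c (hodge \<alpha>)) J"

definition hodge_laplacian :: "(nat \<Rightarrow> nat \<Rightarrow> nat \<Rightarrow> real) \<Rightarrow> form \<Rightarrow> form" where
  "hodge_laplacian c \<alpha> = (\<lambda>I. dform c (codiff c \<alpha>) I + codiff c (dform c \<alpha>) I)"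

definition tau2 :: "(nat \<Rightarrow> nat \<Rightarrow> nat \<Rightarrow> real) \<Rightarrow> form \<Rightarrow> form" where
  "tau2 c \<phi> = (\<lambda>I. - hodge (dform c (hodge \<phi>)) I)"

definition phi0 :: form where
  "phi0 I = (if I = {1,2,7} \<or> I = {3,4,7} \<or> I = {5,6,7} \<or> I = {1,3,5} then 1
             else if I = {1,4,6} \<or> I = {2,3,6} \<or> I = {2,4,5} then -1 else 0)"

end

theory Submission
  imports Defs
begin

lemma card_filter_list: "finite J \<Longrightarrow> card {j \<in> J. P j} = length (filter P (sorted_list_of_set J))"
proof -
  assume f: "finite J"
  have "card {j \<in> J. P j} = card (set (filter P (sorted_list_of_set J)))" using f by simp
  also have "\<dots> = length (filter P (sorted_list_of_set J))"
    by (rule distinct_card) simp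
  finally show ?thesis .
qed

lemma card_pairs: "finite I \<Longrightarrow> finite J \<Longrightarrow>
  card {(i, j). i \<in> I \<and> j \<in> J \<and> j < i} = sum_list (map (\<lambda>i. length (filter (\<lambda>j. j < i) (sorted_list_of_set J))) (sorted_list_of_set I))"
proof -
  assume f: "finite I" "finite J"
  have e: "{(i, j). i \<in> I \<and> j \<in> J \<and> j < i} = Sigma I (\<lambda>i. {j \<in> J. j < i})" by auto
  have "card (Sigma I (\<lambda>i. {j \<in> J. j < i})) = (\<Sum>i\<in>I. card {j \<in> J. j < i})"
    using f by (simp add: card_SigmaI)
  also have "\<dots> = (\<Sum>i\<in>I. length (filter (\<lambda>j. j < i) (sorted_list_of_set J)))"
    using f by (simp add: card_filter_list)
  also have "\<dots> = sum_list (map (\<lambda>i. length (filter (\<lambda>j. j < i) (sorted_list_of_set J))) (sorted_list_of_set I))"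
    using f by (metis sum.distinct_set_conv_list distinct_sorted_list_of_set set_sorted_list_of_set)
  finally show ?thesis using e by simp
qed

lemma set_eq_sl: "finite I \<Longrightarrow> finite J \<Longrightarrow> (I = J) = (sorted_list_of_set I = sorted_list_of_set J)"
  by (metis sorted_list_of_set.set_sorted_key_list_of_set)

lemma int17: "{1..7::nat} = {1,2,3,4,5,6,7}" by auto

lemma ev_ins_eval: "finite J \<Longrightarrow> ev_ins \<alpha> m J = (if m \<in> J then 0 else (-1::real) ^ length (filter (\<lambda>j. j < m) (sorted_list_of_set J)) * \<alpha> (insert m J))"
  by (simp add: ev_ins_def card_filter_list)

lemma wedge_sign_eval: "finite I \<Longrightarrow> finite J \<Longrightarrow> wedge_sign I J = (-1::real) ^ sum_list (map (\<lambda>i. length (filter (\<lambda>j. j < i) (sorted_list_of_set J))) (sorted_list_of_set I))"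
  by (simp add: wedge_sign_def card_pairs)

lemma phi0_eval: "finite I \<Longrightarrow> phi0 I = (let L = sorted_list_of_set I in if L = [1,2,7] \<or> L = [3,4,7] \<or> L = [5,6,7] \<or> L = [1,3,5] then 1
             else if L = [1,4,6] \<or> L = [2,3,6] \<or> L = [2,4,5] then -1 else 0)"
  unfolding phi0_def Let_def
  by (simp only: set_eq_sl[of I] finite.intros finite_insert) simp


lemma sum4: "(\<Sum>p<4::nat. \<Sum>q<4::nat. if p < q then f p q else (0::real)) = f 0 1 + f 0 2 + f 0 3 + f 1 2 + f 1 3 + f 2 3"
  by (simp add: eval_nat_numeral)
lemma sum5: "(\<Sum>p<5::nat. \<Sum>q<5::nat. if p < q then f p q else (0::real)) = f 0 1 + f 0 2 + f 0 3 + f 0 4 + f 1 2 + f 1 3 + f 1 4 + f 2 3 + f 2 4 + f 3 4"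
  by (simp add: eval_nat_numeral)
lemma sum3: "(\<Sum>p<3::nat. \<Sum>q<3::nat. if p < q then f p q else (0::real)) = f 0 1 + f 0 2 + f 1 2"
  by (simp add: eval_nat_numeral)
lemma sum17: "(\<Sum>m\<in>{1..7::nat}. f m) = f 1 + f 2 + f 3 + f 4 + f 5 + f 6 + (f 7::real)"
  unfolding int17 by simp

lemma sum17': "(\<Sum>m\<in>{Suc 0..7::nat}. f m) = f 1 + f 2 + f 3 + f 4 + f 5 + f 6 + (f 7::real)"
  using sum17 by simp

definition S :: "(nat \<Rightarrow> nat \<Rightarrow> nat \<Rightarrow> real) \<Rightarrow> form \<Rightarrow> nat set \<Rightarrow> nat \<Rightarrow> nat \<Rightarrow> real" where
  "S c \<alpha> I i j = (\<Sum>m\<in>{1..7}. c i j m * ev_ins \<alpha> m (I - {i, j}))"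

lemma dform_4: "I \<subseteq> {1..7} \<Longrightarrow> sorted_list_of_set I = [ua,ub,uc,ud] \<Longrightarrow>
  dform c \<alpha> I = - S c \<alpha> I ua ub + S c \<alpha> I ua uc - S c \<alpha> I ua ud - S c \<alpha> I ub uc + S c \<alpha> I ub ud - S c \<alpha> I uc ud"
  unfolding dform_def Let_def S_def by (simp add: sum4)






lemma dform_3: "I \<subseteq> {1..7} \<Longrightarrow> sorted_list_of_set I = [ua,ub,uc] \<Longrightarrow>
  dform c \<alpha> I = - S c \<alpha> I ua ub + S c \<alpha> I ua uc - S c \<alpha> I ub uc"
  unfolding dform_def Let_def S_def by (simp add: sum3)
lemma dform_5: "I \<subseteq> {1..7} \<Longrightarrow> sorted_list_of_set I = [ua,ub,uc,ud,ue] \<Longrightarrow>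
  dform c \<alpha> I = - S c \<alpha> I ua ub + S c \<alpha> I ua uc - S c \<alpha> I ua ud + S c \<alpha> I ua ue
   - S c \<alpha> I ub uc + S c \<alpha> I ub ud - S c \<alpha> I ub ue - S c \<alpha> I uc ud + S c \<alpha> I uc ue - S c \<alpha> I ud ue"
  unfolding dform_def Let_def S_def by (simp add: sum5)
lemma hodge_eval: "hodge \<alpha> J = (if J \<subseteq> {1,2,3,4,5,6,7} then wedge_sign ({1,2,3,4,5,6,7} - J) J * \<alpha> ({1,2,3,4,5,6,7} - J) else 0)"
  unfolding hodge_def int17 ..


definition Tf :: "real \<Rightarrow> real \<Rightarrow> real \<Rightarrow> form" where
  "Tf a b c = (\<lambda>I. if I = {1,2} then a else if I = {3,4} then b else if I = {5,6} then c else 0)"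
lemma Tf_eval: "finite I \<Longrightarrow> Tf a b c I = (let L = sorted_list_of_set I in if L = [1,2] then a else if L = [3,4] then b else if L = [5,6] then c else 0)"
  unfolding Tf_def Let_def
  by (simp only: set_eq_sl[of I] finite.intros finite_insert) simp

lemma int36: "{3..6::nat} = {3,4,5,6}" by auto
lemma sum36: "(\<Sum>k\<in>{3..6::nat}. f k) = f 3 + f 4 + f 5 + (f 6::real)"
  unfolding int36 by simp

lemma ev_ins_zero: "ev_ins (\<lambda>_. 0) m J = 0" by (simp add: ev_ins_def)
lemma dform_zero: "dform cc (\<lambda>_. 0) = (\<lambda>_. 0)"
  apply (rule ext)
  unfolding dform_def Let_def ev_ins_zero mult_zero_right sum.neutral_const
  apply simp
  done
lemma hodge_zero: "hodge (\<lambda>_. 0) = (\<lambda>_. 0)"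
  by (rule ext) (simp add: hodge_def)

lemma lap_red:
  assumes cl: "dform cc phi0 = (\<lambda>_. 0)" and t: "tau2 cc phi0 = Tf a b c"
  shows "hodge_laplacian cc phi0 = dform cc (Tf a b c)"
proof -
  have cod0: "codiff cc (dform cc phi0) = (\<lambda>_. 0)"
    by (rule ext) (simp add: cl codiff_def hodge_zero dform_zero)
  have cod: "codiff cc phi0 = Tf a b c"
  proof (rule ext)
    fix J
    have "codiff cc phi0 J = (-1)^(card J) * tau2 cc phi0 J" by (simp add: codiff_def tau2_def)
    also have "\<dots> = (-1)^(card J) * Tf a b c J" using t by simp
    also have "\<dots> = Tf a b c J" by (auto simp: Tf_def)
    finally show "codiff cc phi0 J = Tf a b c J" .
  qed
  show ?thesis by (rule ext) (simp add: hodge_laplacian_def cod cod0)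
qed

lemma divb: "(b::real) \<noteq> 0 \<Longrightarrow> b * X = 0 \<Longrightarrow> X = 0" by simp


theorem proposition3p1:
  fixes x y z w a b c :: real and A B C :: "nat \<Rightarrow> nat \<Rightarrow> real"
  assumes trB: "(\<Sum>i\<in>{3..6::nat}. B i i) = 0"
    and trC: "(\<Sum>i\<in>{3..6::nat}. C i i) = 0"
    and AB: "\<forall>i\<in>{3..6::nat}. \<forall>j\<in>{3..6}.
               (\<Sum>k\<in>{3..6}. A i k * B k j - B i k * A k j) = x * B i j + y * C i j"
    and AC: "\<forall>i\<in>{3..6::nat}. \<forall>j\<in>{3..6}.
               (\<Sum>k\<in>{3..6}. A i k * C k j - C i k * A k j) = z * B i j + w * C i j"
    and BC: "\<forall>i\<in>{3..6::nat}. \<forall>j\<in>{3..6}.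
               (\<Sum>k\<in>{3..6}. B i k * C k j - C i k * B k j) = 0"
    and closed: "dform (lie_c x y z w A B C) phi0 = (\<lambda>_. 0)"
    and eigen: "\<exists>lam::real. hodge_laplacian (lie_c x y z w A B C) phi0 = (\<lambda>I. lam * phi0 I)"
    and tau: "tau2 (lie_c x y z w A B C) phi0 =
               (\<lambda>I. if I = {1,2} then a else if I = {3,4} then b else if I = {5,6} then c else 0)"
    and abc: "a + b + c = 0"
  shows "tau2 (lie_c x y z w A B C) phi0 = (\<lambda>_. 0)"
proof -
  have tauT: "tau2 (lie_c x y z w A B C) phi0 = Tf a b c" unfolding Tf_def by (rule tau)
  obtain lam where eig: "hodge_laplacian (lie_c x y z w A B C) phi0 = (\<lambda>I. lam * phi0 I)"
    using eigen by blast
  have eigT: "dform (lie_c x y z w A B C) (Tf a b c) = (\<lambda>I. lam * phi0 I)"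
    using lap_red[OF closed tauT] eig by simp

  have cl_1234: "- B 5 3 + B 6 4 + C 5 4 + C 6 3 = 0"
  proof -
    have "dform (lie_c x y z w A B C) phi0 {1,2,3,4} = - B 5 3 + B 6 4 + C 5 4 + C 6 3"
      apply (subst dform_4[where ua=1 and ub=2 and uc=3 and ud=4])
        apply simp
       apply simp
      apply (simp only: S_def sum17)
      apply (simp add: ev_ins_eval phi0_eval insert_Diff_if Let_def)
      apply (simp add: lie_c_def Let_def algebra_simps)
      done
    moreover have "dform (lie_c x y z w A B C) phi0 {1,2,3,4} = 0" using closed by simp
    ultimately show ?thesis by simp
  qed
  have cl_1235: "B 4 3 + B 6 5 + C 3 3 + C 5 5 = 0"
  proof -
    have "dform (lie_c x y z w A B C) phi0 {1,2,3,5} = B 4 3 + B 6 5 + C 3 3 + C 5 5"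
      apply (subst dform_4[where ua=1 and ub=2 and uc=3 and ud=5])
        apply simp
       apply simp
      apply (simp only: S_def sum17)
      apply (simp add: ev_ins_eval phi0_eval insert_Diff_if Let_def)
      apply (simp add: lie_c_def Let_def algebra_simps)
      done
    moreover have "dform (lie_c x y z w A B C) phi0 {1,2,3,5} = 0" using closed by simp
    ultimately show ?thesis by simp
  qed
  have cl_1236: "B 3 3 + B 6 6 - C 4 3 + C 5 6 = 0"
  proof -
    have "dform (lie_c x y z w A B C) phi0 {1,2,3,6} = B 3 3 + B 6 6 - C 4 3 + C 5 6"
      apply (subst dform_4[where ua=1 and ub=2 and uc=3 and ud=6])
        apply simp
       apply simp
      apply (simp only: S_def sum17)
      apply (simp add: ev_ins_eval phi0_eval insert_Diff_if Let_def)
      apply (simp add: lie_c_def Let_def algebra_simps)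
      done
    moreover have "dform (lie_c x y z w A B C) phi0 {1,2,3,6} = 0" using closed by simp
    ultimately show ?thesis by simp
  qed
  have cl_1245: "B 4 4 + B 5 5 + C 3 4 - C 6 5 = 0"
  proof -
    have "dform (lie_c x y z w A B C) phi0 {1,2,4,5} = B 4 4 + B 5 5 + C 3 4 - C 6 5"
      apply (subst dform_4[where ua=1 and ub=2 and uc=4 and ud=5])
        apply simp
       apply simp
      apply (simp only: S_def sum17)
      apply (simp add: ev_ins_eval phi0_eval insert_Diff_if Let_def)
      apply (simp add: lie_c_def Let_def algebra_simps)
      done
    moreover have "dform (lie_c x y z w A B C) phi0 {1,2,4,5} = 0" using closed by simp
    ultimately show ?thesis by simp
  qed
  have cl_1246: "B 3 4 + B 5 6 - C 4 4 - C 6 6 = 0"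
  proof -
    have "dform (lie_c x y z w A B C) phi0 {1,2,4,6} = B 3 4 + B 5 6 - C 4 4 - C 6 6"
      apply (subst dform_4[where ua=1 and ub=2 and uc=4 and ud=6])
        apply simp
       apply simp
      apply (simp only: S_def sum17)
      apply (simp add: ev_ins_eval phi0_eval insert_Diff_if Let_def)
      apply (simp add: lie_c_def Let_def algebra_simps)
      done
    moreover have "dform (lie_c x y z w A B C) phi0 {1,2,4,6} = 0" using closed by simp
    ultimately show ?thesis by simp
  qed
  have cl_1256: "B 3 5 - B 4 6 - C 3 6 - C 4 5 = 0"
  proof -
    have "dform (lie_c x y z w A B C) phi0 {1,2,5,6} = B 3 5 - B 4 6 - C 3 6 - C 4 5"
      apply (subst dform_4[where ua=1 and ub=2 and uc=5 and ud=6])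
        apply simp
       apply simp
      apply (simp only: S_def sum17)
      apply (simp add: ev_ins_eval phi0_eval insert_Diff_if Let_def)
      apply (simp add: lie_c_def Let_def algebra_simps)
      done
    moreover have "dform (lie_c x y z w A B C) phi0 {1,2,5,6} = 0" using closed by simp
    ultimately show ?thesis by simp
  qed
  have cl_1347: "A 5 4 + A 6 3 - B 3 3 - B 4 4 = 0"
  proof -
    have "dform (lie_c x y z w A B C) phi0 {1,3,4,7} = A 5 4 + A 6 3 - B 3 3 - B 4 4"
      apply (subst dform_4[where ua=1 and ub=3 and uc=4 and ud=7])
        apply simp
       apply simp
      apply (simp only: S_def sum17)
      apply (simp add: ev_ins_eval phi0_eval insert_Diff_if Let_def)
      apply (simp add: lie_c_def Let_def algebra_simps)
      done
    moreover have "dform (lie_c x y z w A B C) phi0 {1,3,4,7} = 0" using closed by simp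
    ultimately show ?thesis by simp
  qed
  have cl_1357: "A 3 3 + A 5 5 - B 4 5 + B 6 3 + x = 0"
  proof -
    have "dform (lie_c x y z w A B C) phi0 {1,3,5,7} = A 3 3 + A 5 5 - B 4 5 + B 6 3 + x"
      apply (subst dform_4[where ua=1 and ub=3 and uc=5 and ud=7])
        apply simp
       apply simp
      apply (simp only: S_def sum17)
      apply (simp add: ev_ins_eval phi0_eval insert_Diff_if Let_def)
      apply (simp add: lie_c_def Let_def algebra_simps)
      done
    moreover have "dform (lie_c x y z w A B C) phi0 {1,3,5,7} = 0" using closed by simp
    ultimately show ?thesis by simp
  qed
  have cl_1367: "- A 4 3 + A 5 6 - B 4 6 - B 5 3 - y = 0"
  proof -
    have "dform (lie_c x y z w A B C) phi0 {1,3,6,7} = - A 4 3 + A 5 6 - B 4 6 - B 5 3 - y"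
      apply (subst dform_4[where ua=1 and ub=3 and uc=6 and ud=7])
        apply simp
       apply simp
      apply (simp only: S_def sum17)
      apply (simp add: ev_ins_eval phi0_eval insert_Diff_if Let_def)
      apply (simp add: lie_c_def Let_def algebra_simps)
      done
    moreover have "dform (lie_c x y z w A B C) phi0 {1,3,6,7} = 0" using closed by simp
    ultimately show ?thesis by simp
  qed
  have cl_1457: "A 3 4 - A 6 5 + B 3 5 + B 6 4 - y = 0"
  proof -
    have "dform (lie_c x y z w A B C) phi0 {1,4,5,7} = A 3 4 - A 6 5 + B 3 5 + B 6 4 - y"
      apply (subst dform_4[where ua=1 and ub=4 and uc=5 and ud=7])
        apply simp
       apply simp
      apply (simp only: S_def sum17)
      apply (simp add: ev_ins_eval phi0_eval insert_Diff_if Let_def)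
      apply (simp add: lie_c_def Let_def algebra_simps)
      done
    moreover have "dform (lie_c x y z w A B C) phi0 {1,4,5,7} = 0" using closed by simp
    ultimately show ?thesis by simp
  qed
  have cl_1467: "- A 4 4 - A 6 6 + B 3 6 - B 5 4 - x = 0"
  proof -
    have "dform (lie_c x y z w A B C) phi0 {1,4,6,7} = - A 4 4 - A 6 6 + B 3 6 - B 5 4 - x"
      apply (subst dform_4[where ua=1 and ub=4 and uc=6 and ud=7])
        apply simp
       apply simp
      apply (simp only: S_def sum17)
      apply (simp add: ev_ins_eval phi0_eval insert_Diff_if Let_def)
      apply (simp add: lie_c_def Let_def algebra_simps)
      done
    moreover have "dform (lie_c x y z w A B C) phi0 {1,4,6,7} = 0" using closed by simp
    ultimately show ?thesis by simp
  qed
  have cl_1567: "- A 3 6 - A 4 5 - B 5 5 - B 6 6 = 0"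
  proof -
    have "dform (lie_c x y z w A B C) phi0 {1,5,6,7} = - A 3 6 - A 4 5 - B 5 5 - B 6 6"
      apply (subst dform_4[where ua=1 and ub=5 and uc=6 and ud=7])
        apply simp
       apply simp
      apply (simp only: S_def sum17)
      apply (simp add: ev_ins_eval phi0_eval insert_Diff_if Let_def)
      apply (simp add: lie_c_def Let_def algebra_simps)
      done
    moreover have "dform (lie_c x y z w A B C) phi0 {1,5,6,7} = 0" using closed by simp
    ultimately show ?thesis by simp
  qed
  have cl_2347: "A 5 3 - A 6 4 - C 3 3 - C 4 4 = 0"
  proof -
    have "dform (lie_c x y z w A B C) phi0 {2,3,4,7} = A 5 3 - A 6 4 - C 3 3 - C 4 4"
      apply (subst dform_4[where ua=2 and ub=3 and uc=4 and ud=7])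
        apply simp
       apply simp
      apply (simp only: S_def sum17)
      apply (simp add: ev_ins_eval phi0_eval insert_Diff_if Let_def)
      apply (simp add: lie_c_def Let_def algebra_simps)
      done
    moreover have "dform (lie_c x y z w A B C) phi0 {2,3,4,7} = 0" using closed by simp
    ultimately show ?thesis by simp
  qed
  have cl_2357: "- A 4 3 - A 6 5 - C 4 5 + C 6 3 + z = 0"
  proof -
    have "dform (lie_c x y z w A B C) phi0 {2,3,5,7} = - A 4 3 - A 6 5 - C 4 5 + C 6 3 + z"
      apply (subst dform_4[where ua=2 and ub=3 and uc=5 and ud=7])
        apply simp
       apply simp
      apply (simp only: S_def sum17)
      apply (simp add: ev_ins_eval phi0_eval insert_Diff_if Let_def)
      apply (simp add: lie_c_def Let_def algebra_simps)
      done
    moreover have "dform (lie_c x y z w A B C) phi0 {2,3,5,7} = 0" using closed by simp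
    ultimately show ?thesis by simp
  qed
  have cl_2367: "- A 3 3 - A 6 6 - C 4 6 - C 5 3 - w = 0"
  proof -
    have "dform (lie_c x y z w A B C) phi0 {2,3,6,7} = - A 3 3 - A 6 6 - C 4 6 - C 5 3 - w"
      apply (subst dform_4[where ua=2 and ub=3 and uc=6 and ud=7])
        apply simp
       apply simp
      apply (simp only: S_def sum17)
      apply (simp add: ev_ins_eval phi0_eval insert_Diff_if Let_def)
      apply (simp add: lie_c_def Let_def algebra_simps)
      done
    moreover have "dform (lie_c x y z w A B C) phi0 {2,3,6,7} = 0" using closed by simp
    ultimately show ?thesis by simp
  qed
  have cl_2457: "- A 4 4 - A 5 5 + C 3 5 + C 6 4 - w = 0"
  proof -
    have "dform (lie_c x y z w A B C) phi0 {2,4,5,7} = - A 4 4 - A 5 5 + C 3 5 + C 6 4 - w"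
      apply (subst dform_4[where ua=2 and ub=4 and uc=5 and ud=7])
        apply simp
       apply simp
      apply (simp only: S_def sum17)
      apply (simp add: ev_ins_eval phi0_eval insert_Diff_if Let_def)
      apply (simp add: lie_c_def Let_def algebra_simps)
      done
    moreover have "dform (lie_c x y z w A B C) phi0 {2,4,5,7} = 0" using closed by simp
    ultimately show ?thesis by simp
  qed
  have cl_2467: "- A 3 4 - A 5 6 + C 3 6 - C 5 4 - z = 0"
  proof -
    have "dform (lie_c x y z w A B C) phi0 {2,4,6,7} = - A 3 4 - A 5 6 + C 3 6 - C 5 4 - z"
      apply (subst dform_4[where ua=2 and ub=4 and uc=6 and ud=7])
        apply simp
       apply simp
      apply (simp only: S_def sum17)
      apply (simp add: ev_ins_eval phi0_eval insert_Diff_if Let_def)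
      apply (simp add: lie_c_def Let_def algebra_simps)
      done
    moreover have "dform (lie_c x y z w A B C) phi0 {2,4,6,7} = 0" using closed by simp
    ultimately show ?thesis by simp
  qed
  have cl_2567: "- A 3 5 + A 4 6 - C 5 5 - C 6 6 = 0"
  proof -
    have "dform (lie_c x y z w A B C) phi0 {2,5,6,7} = - A 3 5 + A 4 6 - C 5 5 - C 6 6"
      apply (subst dform_4[where ua=2 and ub=5 and uc=6 and ud=7])
        apply simp
       apply simp
      apply (simp only: S_def sum17)
      apply (simp add: ev_ins_eval phi0_eval insert_Diff_if Let_def)
      apply (simp add: lie_c_def Let_def algebra_simps)
      done
    moreover have "dform (lie_c x y z w A B C) phi0 {2,5,6,7} = 0" using closed by simp
    ultimately show ?thesis by simp
  qed
  have ta_12: "A 3 3 + A 4 4 + A 5 5 + A 6 6 - a = 0"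
  proof -
    have "tau2 (lie_c x y z w A B C) phi0 {1,2} = A 3 3 + A 4 4 + A 5 5 + A 6 6"
      apply (simp only: tau2_def)
      apply (subst hodge_eval)
      apply (simp add: insert_Diff_if wedge_sign_eval)
      apply (subst dform_5[where ua=3 and ub=4 and uc=5 and ud=6 and ue=7])
        apply simp
       apply simp
      apply (simp only: S_def sum17)
      apply (simp add: ev_ins_eval insert_Diff_if hodge_eval phi0_eval wedge_sign_eval Let_def)
      apply (simp add: lie_c_def Let_def algebra_simps)
      done
    moreover have "tau2 (lie_c x y z w A B C) phi0 {1,2} = a" using tauT by (simp add: Tf_eval)
    ultimately show ?thesis by simp
  qed
  have ta_17: "- C 3 3 - C 4 4 - C 5 5 - C 6 6 = 0"
  proof -
    have "tau2 (lie_c x y z w A B C) phi0 {1,7} = - C 3 3 - C 4 4 - C 5 5 - C 6 6"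
      apply (simp only: tau2_def)
      apply (subst hodge_eval)
      apply (simp add: insert_Diff_if wedge_sign_eval)
      apply (subst dform_5[where ua=2 and ub=3 and uc=4 and ud=5 and ue=6])
        apply simp
       apply simp
      apply (simp only: S_def sum17)
      apply (simp add: ev_ins_eval insert_Diff_if hodge_eval phi0_eval wedge_sign_eval Let_def)
      apply (simp add: lie_c_def Let_def algebra_simps)
      done
    moreover have "tau2 (lie_c x y z w A B C) phi0 {1,7} = 0" using tauT by (simp add: Tf_eval)
    ultimately show ?thesis by simp
  qed
  have ta_27: "B 3 3 + B 4 4 + B 5 5 + B 6 6 = 0"
  proof -
    have "tau2 (lie_c x y z w A B C) phi0 {2,7} = B 3 3 + B 4 4 + B 5 5 + B 6 6"
      apply (simp only: tau2_def)
      apply (subst hodge_eval)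
      apply (simp add: insert_Diff_if wedge_sign_eval)
      apply (subst dform_5[where ua=1 and ub=3 and uc=4 and ud=5 and ue=6])
        apply simp
       apply simp
      apply (simp only: S_def sum17)
      apply (simp add: ev_ins_eval insert_Diff_if hodge_eval phi0_eval wedge_sign_eval Let_def)
      apply (simp add: lie_c_def Let_def algebra_simps)
      done
    moreover have "tau2 (lie_c x y z w A B C) phi0 {2,7} = 0" using tauT by (simp add: Tf_eval)
    ultimately show ?thesis by simp
  qed
  have ta_34: "A 5 5 + A 6 6 - B 3 6 - B 4 5 - C 3 5 + C 4 6 - b + w + x = 0"
  proof -
    have "tau2 (lie_c x y z w A B C) phi0 {3,4} = A 5 5 + A 6 6 - B 3 6 - B 4 5 - C 3 5 + C 4 6 + w + x"
      apply (simp only: tau2_def)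
      apply (subst hodge_eval)
      apply (simp add: insert_Diff_if wedge_sign_eval)
      apply (subst dform_5[where ua=1 and ub=2 and uc=5 and ud=6 and ue=7])
        apply simp
       apply simp
      apply (simp only: S_def sum17)
      apply (simp add: ev_ins_eval insert_Diff_if hodge_eval phi0_eval wedge_sign_eval Let_def)
      apply (simp add: lie_c_def Let_def algebra_simps)
      done
    moreover have "tau2 (lie_c x y z w A B C) phi0 {3,4} = b" using tauT by (simp add: Tf_eval)
    ultimately show ?thesis by simp
  qed
  have ta_35: "A 3 6 - A 5 4 + B 4 4 + B 6 6 + C 3 4 + C 5 6 = 0"
  proof -
    have "tau2 (lie_c x y z w A B C) phi0 {3,5} = A 3 6 - A 5 4 + B 4 4 + B 6 6 + C 3 4 + C 5 6"
      apply (simp only: tau2_def)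
      apply (subst hodge_eval)
      apply (simp add: insert_Diff_if wedge_sign_eval)
      apply (subst dform_5[where ua=1 and ub=2 and uc=4 and ud=6 and ue=7])
        apply simp
       apply simp
      apply (simp only: S_def sum17)
      apply (simp add: ev_ins_eval insert_Diff_if hodge_eval phi0_eval wedge_sign_eval Let_def)
      apply (simp add: lie_c_def Let_def algebra_simps)
      done
    moreover have "tau2 (lie_c x y z w A B C) phi0 {3,5} = 0" using tauT by (simp add: Tf_eval)
    ultimately show ?thesis by simp
  qed
  have ta_36: "- A 3 5 - A 6 4 + B 3 4 - B 6 5 - C 4 4 - C 5 5 = 0"
  proof -
    have "tau2 (lie_c x y z w A B C) phi0 {3,6} = - A 3 5 - A 6 4 + B 3 4 - B 6 5 - C 4 4 - C 5 5"
      apply (simp only: tau2_def)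
      apply (subst hodge_eval)
      apply (simp add: insert_Diff_if wedge_sign_eval)
      apply (subst dform_5[where ua=1 and ub=2 and uc=4 and ud=5 and ue=7])
        apply simp
       apply simp
      apply (simp only: S_def sum17)
      apply (simp add: ev_ins_eval insert_Diff_if hodge_eval phi0_eval wedge_sign_eval Let_def)
      apply (simp add: lie_c_def Let_def algebra_simps)
      done
    moreover have "tau2 (lie_c x y z w A B C) phi0 {3,6} = 0" using tauT by (simp add: Tf_eval)
    ultimately show ?thesis by simp
  qed
  have ta_45: "A 4 6 + A 5 3 - B 4 3 + B 5 6 - C 3 3 - C 6 6 = 0"
  proof -
    have "tau2 (lie_c x y z w A B C) phi0 {4,5} = A 4 6 + A 5 3 - B 4 3 + B 5 6 - C 3 3 - C 6 6"
      apply (simp only: tau2_def)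
      apply (subst hodge_eval)
      apply (simp add: insert_Diff_if wedge_sign_eval)
      apply (subst dform_5[where ua=1 and ub=2 and uc=3 and ud=6 and ue=7])
        apply simp
       apply simp
      apply (simp only: S_def sum17)
      apply (simp add: ev_ins_eval insert_Diff_if hodge_eval phi0_eval wedge_sign_eval Let_def)
      apply (simp add: lie_c_def Let_def algebra_simps)
      done
    moreover have "tau2 (lie_c x y z w A B C) phi0 {4,5} = 0" using tauT by (simp add: Tf_eval)
    ultimately show ?thesis by simp
  qed
  have ta_46: "- A 4 5 + A 6 3 - B 3 3 - B 5 5 + C 4 3 + C 6 5 = 0"
  proof -
    have "tau2 (lie_c x y z w A B C) phi0 {4,6} = - A 4 5 + A 6 3 - B 3 3 - B 5 5 + C 4 3 + C 6 5"
      apply (simp only: tau2_def)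
      apply (subst hodge_eval)
      apply (simp add: insert_Diff_if wedge_sign_eval)
      apply (subst dform_5[where ua=1 and ub=2 and uc=3 and ud=5 and ue=7])
        apply simp
       apply simp
      apply (simp only: S_def sum17)
      apply (simp add: ev_ins_eval insert_Diff_if hodge_eval phi0_eval wedge_sign_eval Let_def)
      apply (simp add: lie_c_def Let_def algebra_simps)
      done
    moreover have "tau2 (lie_c x y z w A B C) phi0 {4,6} = 0" using tauT by (simp add: Tf_eval)
    ultimately show ?thesis by simp
  qed
  have ta_56: "A 3 3 + A 4 4 + B 5 4 + B 6 3 + C 5 3 - C 6 4 - c + w + x = 0"
  proof -
    have "tau2 (lie_c x y z w A B C) phi0 {5,6} = A 3 3 + A 4 4 + B 5 4 + B 6 3 + C 5 3 - C 6 4 + w + x"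
      apply (simp only: tau2_def)
      apply (subst hodge_eval)
      apply (simp add: insert_Diff_if wedge_sign_eval)
      apply (subst dform_5[where ua=1 and ub=2 and uc=3 and ud=4 and ue=7])
        apply simp
       apply simp
      apply (simp only: S_def sum17)
      apply (simp add: ev_ins_eval insert_Diff_if hodge_eval phi0_eval wedge_sign_eval Let_def)
      apply (simp add: lie_c_def Let_def algebra_simps)
      done
    moreover have "tau2 (lie_c x y z w A B C) phi0 {5,6} = c" using tauT by (simp add: Tf_eval)
    ultimately show ?thesis by simp
  qed
  have ei_127: "- a * w - a * x - lam = 0"
  proof -
    have "dform (lie_c x y z w A B C) (Tf a b c) {1,2,7} = - a * w - a * x"
      apply (subst dform_3[where ua=1 and ub=2 and uc=7])
        apply simp
       apply simp
      apply (simp only: S_def sum17)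
      apply (simp add: ev_ins_eval insert_Diff_if Tf_eval Let_def)
      apply (simp add: lie_c_def Let_def algebra_simps)
      done
    moreover have "dform (lie_c x y z w A B C) (Tf a b c) {1,2,7} = lam" using eigT by (simp add: phi0_eval)
    ultimately show ?thesis by simp
  qed
  have ei_134: "- B 3 3 * b - B 4 4 * b = 0"
  proof -
    have "dform (lie_c x y z w A B C) (Tf a b c) {1,3,4} = - B 3 3 * b - B 4 4 * b"
      apply (subst dform_3[where ua=1 and ub=3 and uc=4])
        apply simp
       apply simp
      apply (simp only: S_def sum17)
      apply (simp add: ev_ins_eval insert_Diff_if Tf_eval Let_def)
      apply (simp add: lie_c_def Let_def algebra_simps)
      done
    moreover have "dform (lie_c x y z w A B C) (Tf a b c) {1,3,4} = 0" using eigT by (simp add: phi0_eval)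
    ultimately show ?thesis by simp
  qed
  have ei_135: "- B 4 5 * b + B 6 3 * c - lam = 0"
  proof -
    have "dform (lie_c x y z w A B C) (Tf a b c) {1,3,5} = - B 4 5 * b + B 6 3 * c"
      apply (subst dform_3[where ua=1 and ub=3 and uc=5])
        apply simp
       apply simp
      apply (simp only: S_def sum17)
      apply (simp add: ev_ins_eval insert_Diff_if Tf_eval Let_def)
      apply (simp add: lie_c_def Let_def algebra_simps)
      done
    moreover have "dform (lie_c x y z w A B C) (Tf a b c) {1,3,5} = lam" using eigT by (simp add: phi0_eval)
    ultimately show ?thesis by simp
  qed
  have ei_136: "- B 4 6 * b - B 5 3 * c = 0"
  proof -
    have "dform (lie_c x y z w A B C) (Tf a b c) {1,3,6} = - B 4 6 * b - B 5 3 * c"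
      apply (subst dform_3[where ua=1 and ub=3 and uc=6])
        apply simp
       apply simp
      apply (simp only: S_def sum17)
      apply (simp add: ev_ins_eval insert_Diff_if Tf_eval Let_def)
      apply (simp add: lie_c_def Let_def algebra_simps)
      done
    moreover have "dform (lie_c x y z w A B C) (Tf a b c) {1,3,6} = 0" using eigT by (simp add: phi0_eval)
    ultimately show ?thesis by simp
  qed
  have ei_145: "B 3 5 * b + B 6 4 * c = 0"
  proof -
    have "dform (lie_c x y z w A B C) (Tf a b c) {1,4,5} = B 3 5 * b + B 6 4 * c"
      apply (subst dform_3[where ua=1 and ub=4 and uc=5])
        apply simp
       apply simp
      apply (simp only: S_def sum17)
      apply (simp add: ev_ins_eval insert_Diff_if Tf_eval Let_def)
      apply (simp add: lie_c_def Let_def algebra_simps)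
      done
    moreover have "dform (lie_c x y z w A B C) (Tf a b c) {1,4,5} = 0" using eigT by (simp add: phi0_eval)
    ultimately show ?thesis by simp
  qed
  have ei_146: "B 3 6 * b - B 5 4 * c + lam = 0"
  proof -
    have "dform (lie_c x y z w A B C) (Tf a b c) {1,4,6} = B 3 6 * b - B 5 4 * c"
      apply (subst dform_3[where ua=1 and ub=4 and uc=6])
        apply simp
       apply simp
      apply (simp only: S_def sum17)
      apply (simp add: ev_ins_eval insert_Diff_if Tf_eval Let_def)
      apply (simp add: lie_c_def Let_def algebra_simps)
      done
    moreover have "dform (lie_c x y z w A B C) (Tf a b c) {1,4,6} = - lam" using eigT by (simp add: phi0_eval)
    ultimately show ?thesis by simp
  qed
  have ei_156: "- B 5 5 * c - B 6 6 * c = 0"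
  proof -
    have "dform (lie_c x y z w A B C) (Tf a b c) {1,5,6} = - B 5 5 * c - B 6 6 * c"
      apply (subst dform_3[where ua=1 and ub=5 and uc=6])
        apply simp
       apply simp
      apply (simp only: S_def sum17)
      apply (simp add: ev_ins_eval insert_Diff_if Tf_eval Let_def)
      apply (simp add: lie_c_def Let_def algebra_simps)
      done
    moreover have "dform (lie_c x y z w A B C) (Tf a b c) {1,5,6} = 0" using eigT by (simp add: phi0_eval)
    ultimately show ?thesis by simp
  qed
  have ei_234: "- C 3 3 * b - C 4 4 * b = 0"
  proof -
    have "dform (lie_c x y z w A B C) (Tf a b c) {2,3,4} = - C 3 3 * b - C 4 4 * b"
      apply (subst dform_3[where ua=2 and ub=3 and uc=4])
        apply simp
       apply simp
      apply (simp only: S_def sum17)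
      apply (simp add: ev_ins_eval insert_Diff_if Tf_eval Let_def)
      apply (simp add: lie_c_def Let_def algebra_simps)
      done
    moreover have "dform (lie_c x y z w A B C) (Tf a b c) {2,3,4} = 0" using eigT by (simp add: phi0_eval)
    ultimately show ?thesis by simp
  qed
  have ei_235: "- C 4 5 * b + C 6 3 * c = 0"
  proof -
    have "dform (lie_c x y z w A B C) (Tf a b c) {2,3,5} = - C 4 5 * b + C 6 3 * c"
      apply (subst dform_3[where ua=2 and ub=3 and uc=5])
        apply simp
       apply simp
      apply (simp only: S_def sum17)
      apply (simp add: ev_ins_eval insert_Diff_if Tf_eval Let_def)
      apply (simp add: lie_c_def Let_def algebra_simps)
      done
    moreover have "dform (lie_c x y z w A B C) (Tf a b c) {2,3,5} = 0" using eigT by (simp add: phi0_eval)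
    ultimately show ?thesis by simp
  qed
  have ei_236: "- C 4 6 * b - C 5 3 * c + lam = 0"
  proof -
    have "dform (lie_c x y z w A B C) (Tf a b c) {2,3,6} = - C 4 6 * b - C 5 3 * c"
      apply (subst dform_3[where ua=2 and ub=3 and uc=6])
        apply simp
       apply simp
      apply (simp only: S_def sum17)
      apply (simp add: ev_ins_eval insert_Diff_if Tf_eval Let_def)
      apply (simp add: lie_c_def Let_def algebra_simps)
      done
    moreover have "dform (lie_c x y z w A B C) (Tf a b c) {2,3,6} = - lam" using eigT by (simp add: phi0_eval)
    ultimately show ?thesis by simp
  qed
  have ei_245: "C 3 5 * b + C 6 4 * c + lam = 0"
  proof -
    have "dform (lie_c x y z w A B C) (Tf a b c) {2,4,5} = C 3 5 * b + C 6 4 * c"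
      apply (subst dform_3[where ua=2 and ub=4 and uc=5])
        apply simp
       apply simp
      apply (simp only: S_def sum17)
      apply (simp add: ev_ins_eval insert_Diff_if Tf_eval Let_def)
      apply (simp add: lie_c_def Let_def algebra_simps)
      done
    moreover have "dform (lie_c x y z w A B C) (Tf a b c) {2,4,5} = - lam" using eigT by (simp add: phi0_eval)
    ultimately show ?thesis by simp
  qed
  have ei_246: "C 3 6 * b - C 5 4 * c = 0"
  proof -
    have "dform (lie_c x y z w A B C) (Tf a b c) {2,4,6} = C 3 6 * b - C 5 4 * c"
      apply (subst dform_3[where ua=2 and ub=4 and uc=6])
        apply simp
       apply simp
      apply (simp only: S_def sum17)
      apply (simp add: ev_ins_eval insert_Diff_if Tf_eval Let_def)
      apply (simp add: lie_c_def Let_def algebra_simps)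
      done
    moreover have "dform (lie_c x y z w A B C) (Tf a b c) {2,4,6} = 0" using eigT by (simp add: phi0_eval)
    ultimately show ?thesis by simp
  qed
  have ei_256: "- C 5 5 * c - C 6 6 * c = 0"
  proof -
    have "dform (lie_c x y z w A B C) (Tf a b c) {2,5,6} = - C 5 5 * c - C 6 6 * c"
      apply (subst dform_3[where ua=2 and ub=5 and uc=6])
        apply simp
       apply simp
      apply (simp only: S_def sum17)
      apply (simp add: ev_ins_eval insert_Diff_if Tf_eval Let_def)
      apply (simp add: lie_c_def Let_def algebra_simps)
      done
    moreover have "dform (lie_c x y z w A B C) (Tf a b c) {2,5,6} = 0" using eigT by (simp add: phi0_eval)
    ultimately show ?thesis by simp
  qed
  have ei_347: "- A 3 3 * b - A 4 4 * b - lam = 0"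
  proof -
    have "dform (lie_c x y z w A B C) (Tf a b c) {3,4,7} = - A 3 3 * b - A 4 4 * b"
      apply (subst dform_3[where ua=3 and ub=4 and uc=7])
        apply simp
       apply simp
      apply (simp only: S_def sum17)
      apply (simp add: ev_ins_eval insert_Diff_if Tf_eval Let_def)
      apply (simp add: lie_c_def Let_def algebra_simps)
      done
    moreover have "dform (lie_c x y z w A B C) (Tf a b c) {3,4,7} = lam" using eigT by (simp add: phi0_eval)
    ultimately show ?thesis by simp
  qed
  have ei_357: "- A 4 5 * b + A 6 3 * c = 0"
  proof -
    have "dform (lie_c x y z w A B C) (Tf a b c) {3,5,7} = - A 4 5 * b + A 6 3 * c"
      apply (subst dform_3[where ua=3 and ub=5 and uc=7])
        apply simp
       apply simp
      apply (simp only: S_def sum17)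
      apply (simp add: ev_ins_eval insert_Diff_if Tf_eval Let_def)
      apply (simp add: lie_c_def Let_def algebra_simps)
      done
    moreover have "dform (lie_c x y z w A B C) (Tf a b c) {3,5,7} = 0" using eigT by (simp add: phi0_eval)
    ultimately show ?thesis by simp
  qed
  have ei_367: "- A 4 6 * b - A 5 3 * c = 0"
  proof -
    have "dform (lie_c x y z w A B C) (Tf a b c) {3,6,7} = - A 4 6 * b - A 5 3 * c"
      apply (subst dform_3[where ua=3 and ub=6 and uc=7])
        apply simp
       apply simp
      apply (simp only: S_def sum17)
      apply (simp add: ev_ins_eval insert_Diff_if Tf_eval Let_def)
      apply (simp add: lie_c_def Let_def algebra_simps)
      done
    moreover have "dform (lie_c x y z w A B C) (Tf a b c) {3,6,7} = 0" using eigT by (simp add: phi0_eval)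
    ultimately show ?thesis by simp
  qed
  have ei_457: "A 3 5 * b + A 6 4 * c = 0"
  proof -
    have "dform (lie_c x y z w A B C) (Tf a b c) {4,5,7} = A 3 5 * b + A 6 4 * c"
      apply (subst dform_3[where ua=4 and ub=5 and uc=7])
        apply simp
       apply simp
      apply (simp only: S_def sum17)
      apply (simp add: ev_ins_eval insert_Diff_if Tf_eval Let_def)
      apply (simp add: lie_c_def Let_def algebra_simps)
      done
    moreover have "dform (lie_c x y z w A B C) (Tf a b c) {4,5,7} = 0" using eigT by (simp add: phi0_eval)
    ultimately show ?thesis by simp
  qed
  have ei_467: "A 3 6 * b - A 5 4 * c = 0"
  proof -
    have "dform (lie_c x y z w A B C) (Tf a b c) {4,6,7} = A 3 6 * b - A 5 4 * c"
      apply (subst dform_3[where ua=4 and ub=6 and uc=7])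
        apply simp
       apply simp
      apply (simp only: S_def sum17)
      apply (simp add: ev_ins_eval insert_Diff_if Tf_eval Let_def)
      apply (simp add: lie_c_def Let_def algebra_simps)
      done
    moreover have "dform (lie_c x y z w A B C) (Tf a b c) {4,6,7} = 0" using eigT by (simp add: phi0_eval)
    ultimately show ?thesis by simp
  qed
  have ei_567: "- A 5 5 * c - A 6 6 * c - lam = 0"
  proof -
    have "dform (lie_c x y z w A B C) (Tf a b c) {5,6,7} = - A 5 5 * c - A 6 6 * c"
      apply (subst dform_3[where ua=5 and ub=6 and uc=7])
        apply simp
       apply simp
      apply (simp only: S_def sum17)
      apply (simp add: ev_ins_eval insert_Diff_if Tf_eval Let_def)
      apply (simp add: lie_c_def Let_def algebra_simps)
      done
    moreover have "dform (lie_c x y z w A B C) (Tf a b c) {5,6,7} = lam" using eigT by (simp add: phi0_eval)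
    ultimately show ?thesis by simp
  qed
  have trB4: "B 3 3 + B 4 4 + B 5 5 + B 6 6 = 0" using trB by (simp add: sum36)
  have trC4: "C 3 3 + C 4 4 + C 5 5 + C 6 6 = 0" using trC by (simp add: sum36)
  have jbc_34: "B 3 3 * C 3 4 - B 3 4 * C 3 3 + B 3 4 * C 4 4 + B 3 5 * C 5 4 + B 3 6 * C 6 4 - B 4 4 * C 3 4 - B 5 4 * C 3 5 - B 6 4 * C 3 6 = 0"
  proof -
    have h: "(\<Sum>k\<in>{3..6::nat}. B 3 k * C k 4 - C 3 k * B k 4) = 0" using BC by simp
    then show ?thesis unfolding sum36 by algebra
  qed
  have jac_35: "A 3 3 * C 3 5 + A 3 4 * C 4 5 - A 3 5 * C 3 3 + A 3 5 * C 5 5 + A 3 6 * C 6 5 - A 4 5 * C 3 4 - A 5 5 * C 3 5 - A 6 5 * C 3 6 - B 3 5 * z - C 3 5 * w = 0"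
  proof -
    have h: "(\<Sum>k\<in>{3..6::nat}. A 3 k * C k 5 - C 3 k * A k 5) = z * B 3 5 + w * C 3 5" using AC by simp
    then show ?thesis unfolding sum36 by algebra
  qed
  have jab_36: "A 3 3 * B 3 6 + A 3 4 * B 4 6 + A 3 5 * B 5 6 - A 3 6 * B 3 3 + A 3 6 * B 6 6 - A 4 6 * B 3 4 - A 5 6 * B 3 5 - A 6 6 * B 3 6 - B 3 6 * x - C 3 6 * y = 0"
  proof -
    have h: "(\<Sum>k\<in>{3..6::nat}. A 3 k * B k 6 - B 3 k * A k 6) = x * B 3 6 + y * C 3 6" using AB by simp
    then show ?thesis unfolding sum36 by algebra
  qed
  have jbc_43: "- B 3 3 * C 4 3 + B 4 3 * C 3 3 - B 4 3 * C 4 4 + B 4 4 * C 4 3 + B 4 5 * C 5 3 + B 4 6 * C 6 3 - B 5 3 * C 4 5 - B 6 3 * C 4 6 = 0"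
  proof -
    have h: "(\<Sum>k\<in>{3..6::nat}. B 4 k * C k 3 - C 4 k * B k 3) = 0" using BC by simp
    then show ?thesis unfolding sum36 by algebra
  qed
  have jab_45: "- A 3 5 * B 4 3 + A 4 3 * B 3 5 + A 4 4 * B 4 5 - A 4 5 * B 4 4 + A 4 5 * B 5 5 + A 4 6 * B 6 5 - A 5 5 * B 4 5 - A 6 5 * B 4 6 - B 4 5 * x - C 4 5 * y = 0"
  proof -
    have h: "(\<Sum>k\<in>{3..6::nat}. A 4 k * B k 5 - B 4 k * A k 5) = x * B 4 5 + y * C 4 5" using AB by simp
    then show ?thesis unfolding sum36 by algebra
  qed
  have jac_46: "- A 3 6 * C 4 3 + A 4 3 * C 3 6 + A 4 4 * C 4 6 + A 4 5 * C 5 6 - A 4 6 * C 4 4 + A 4 6 * C 6 6 - A 5 6 * C 4 5 - A 6 6 * C 4 6 - B 4 6 * z - C 4 6 * w = 0"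
  proof -
    have h: "(\<Sum>k\<in>{3..6::nat}. A 4 k * C k 6 - C 4 k * A k 6) = z * B 4 6 + w * C 4 6" using AC by simp
    then show ?thesis unfolding sum36 by algebra
  qed
  have jac_53: "- A 3 3 * C 5 3 - A 4 3 * C 5 4 + A 5 3 * C 3 3 - A 5 3 * C 5 5 + A 5 4 * C 4 3 + A 5 5 * C 5 3 + A 5 6 * C 6 3 - A 6 3 * C 5 6 - B 5 3 * z - C 5 3 * w = 0"
  proof -
    have h: "(\<Sum>k\<in>{3..6::nat}. A 5 k * C k 3 - C 5 k * A k 3) = z * B 5 3 + w * C 5 3" using AC by simp
    then show ?thesis unfolding sum36 by algebra
  qed
  have jbc_56: "- B 3 6 * C 5 3 - B 4 6 * C 5 4 + B 5 3 * C 3 6 + B 5 4 * C 4 6 + B 5 5 * C 5 6 - B 5 6 * C 5 5 + B 5 6 * C 6 6 - B 6 6 * C 5 6 = 0"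
  proof -
    have h: "(\<Sum>k\<in>{3..6::nat}. B 5 k * C k 6 - C 5 k * B k 6) = 0" using BC by simp
    then show ?thesis unfolding sum36 by algebra
  qed
  have jbc_65: "- B 3 5 * C 6 3 - B 4 5 * C 6 4 - B 5 5 * C 6 5 + B 6 3 * C 3 5 + B 6 4 * C 4 5 + B 6 5 * C 5 5 - B 6 5 * C 6 6 + B 6 6 * C 6 5 = 0"
  proof -
    have h: "(\<Sum>k\<in>{3..6::nat}. B 6 k * C k 5 - C 6 k * B k 5) = 0" using BC by simp
    then show ?thesis unfolding sum36 by algebra
  qed
  have h7: "7 * lam = a^2 + b^2 + c^2" using ei_127 ei_347 ei_567 ei_135 ei_146 ei_236 ei_245 ta_12 ta_34 ta_56 abc by algebra
  have hbc0: "a * (b * c - lam) = 0" using ei_347 ei_567 ta_12 abc by algebra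
  have lam0: "lam = 0"
  proof (rule ccontr)
    assume hl: "lam \<noteq> 0"
    have ha0: "a \<noteq> 0"
    proof
      assume "a = 0"
      then show False using ei_127 hl by simp
    qed
    have hbc: "b * c = lam" using hbc0 ha0 by simp
    have hb0: "b \<noteq> 0" using hbc hl by auto
    have hc0: "c \<noteq> 0" using hbc hl by auto
    have hq: "(c - 2*b) * (b - 2*c) = 0" using h7 hbc abc by algebra
    then have "c = 2*b \<or> b = 2*c" by auto
    then show False
    proof
      assume hs: "c = 2*b"
      have ha: "a = -3*b" using abc hs by linarith
      have hlam: "lam = 2*b^2"
      proof -
        have "lam = b * c" by (simp add: hbc)
        also have "\<dots> = 2*b^2" by (simp add: hs power2_eq_square algebra_simps)
        finally show ?thesis .
      qed
      have d_ei_127: "- 2 * b + 3 * w + 3 * x = 0"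
      proof (rule divb[OF hb0])
        show "b * (- 2 * b + 3 * w + 3 * x) = 0" using ei_127 ha hs hlam by algebra
      qed
      have d_ei_134: "- B 3 3 - B 4 4 = 0"
      proof (rule divb[OF hb0])
        show "b * (- B 3 3 - B 4 4) = 0" using ei_134 ha hs hlam by algebra
      qed
      have d_ei_135: "- B 4 5 + 2 * B 6 3 - 2 * b = 0"
      proof (rule divb[OF hb0])
        show "b * (- B 4 5 + 2 * B 6 3 - 2 * b) = 0" using ei_135 ha hs hlam by algebra
      qed
      have d_ei_136: "- B 4 6 - 2 * B 5 3 = 0"
      proof (rule divb[OF hb0])
        show "b * (- B 4 6 - 2 * B 5 3) = 0" using ei_136 ha hs hlam by algebra
      qed
      have d_ei_145: "B 3 5 + 2 * B 6 4 = 0"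
      proof (rule divb[OF hb0])
        show "b * (B 3 5 + 2 * B 6 4) = 0" using ei_145 ha hs hlam by algebra
      qed
      have d_ei_146: "B 3 6 - 2 * B 5 4 + 2 * b = 0"
      proof (rule divb[OF hb0])
        show "b * (B 3 6 - 2 * B 5 4 + 2 * b) = 0" using ei_146 ha hs hlam by algebra
      qed
      have d_ei_156: "- 2 * B 5 5 - 2 * B 6 6 = 0"
      proof (rule divb[OF hb0])
        show "b * (- 2 * B 5 5 - 2 * B 6 6) = 0" using ei_156 ha hs hlam by algebra
      qed
      have d_ei_234: "- C 3 3 - C 4 4 = 0"
      proof (rule divb[OF hb0])
        show "b * (- C 3 3 - C 4 4) = 0" using ei_234 ha hs hlam by algebra
      qed
      have d_ei_235: "- C 4 5 + 2 * C 6 3 = 0"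
      proof (rule divb[OF hb0])
        show "b * (- C 4 5 + 2 * C 6 3) = 0" using ei_235 ha hs hlam by algebra
      qed
      have d_ei_236: "- C 4 6 - 2 * C 5 3 + 2 * b = 0"
      proof (rule divb[OF hb0])
        show "b * (- C 4 6 - 2 * C 5 3 + 2 * b) = 0" using ei_236 ha hs hlam by algebra
      qed
      have d_ei_245: "C 3 5 + 2 * C 6 4 + 2 * b = 0"
      proof (rule divb[OF hb0])
        show "b * (C 3 5 + 2 * C 6 4 + 2 * b) = 0" using ei_245 ha hs hlam by algebra
      qed
      have d_ei_246: "C 3 6 - 2 * C 5 4 = 0"
      proof (rule divb[OF hb0])
        show "b * (C 3 6 - 2 * C 5 4) = 0" using ei_246 ha hs hlam by algebra
      qed
      have d_ei_256: "- 2 * C 5 5 - 2 * C 6 6 = 0"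
      proof (rule divb[OF hb0])
        show "b * (- 2 * C 5 5 - 2 * C 6 6) = 0" using ei_256 ha hs hlam by algebra
      qed
      have d_ei_347: "- A 3 3 - A 4 4 - 2 * b = 0"
      proof (rule divb[OF hb0])
        show "b * (- A 3 3 - A 4 4 - 2 * b) = 0" using ei_347 ha hs hlam by algebra
      qed
      have d_ei_357: "- A 4 5 + 2 * A 6 3 = 0"
      proof (rule divb[OF hb0])
        show "b * (- A 4 5 + 2 * A 6 3) = 0" using ei_357 ha hs hlam by algebra
      qed
      have d_ei_367: "- A 4 6 - 2 * A 5 3 = 0"
      proof (rule divb[OF hb0])
        show "b * (- A 4 6 - 2 * A 5 3) = 0" using ei_367 ha hs hlam by algebra
      qed
      have d_ei_457: "A 3 5 + 2 * A 6 4 = 0"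
      proof (rule divb[OF hb0])
        show "b * (A 3 5 + 2 * A 6 4) = 0" using ei_457 ha hs hlam by algebra
      qed
      have d_ei_467: "A 3 6 - 2 * A 5 4 = 0"
      proof (rule divb[OF hb0])
        show "b * (A 3 6 - 2 * A 5 4) = 0" using ei_467 ha hs hlam by algebra
      qed
      have d_ei_567: "- 2 * A 5 5 - 2 * A 6 6 - 2 * b = 0"
      proof (rule divb[OF hb0])
        show "b * (- 2 * A 5 5 - 2 * A 6 6 - 2 * b) = 0" using ei_567 ha hs hlam by algebra
      qed
      have s_B53: "B 5 3 = - A 5 6 - A 6 5 + (1/2) * C 3 6" using cl_1234 cl_2357 cl_2467 d_ei_136 cl_1367 cl_1457 d_ei_235 d_ei_145 ha hs by linarith
      have s_B43: "B 4 3 = - A 6 4 + B 5 6 + C 4 4 - C 6 6" using cl_1235 ta_17 ta_36 cl_1246 cl_2567 d_ei_367 cl_2347 d_ei_234 ha hs by linarith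
      have s_B33: "B 3 3 = (1/2) * A 5 4 + C 3 4 + (1/2) * C 5 6 - (1/2) * C 6 5" using cl_1245 ta_35 cl_1567 d_ei_357 cl_1347 ha hs by linarith
      have s_B44: "B 4 4 = - (1/2) * A 5 4 - C 3 4 - (1/2) * C 5 6 + (1/2) * C 6 5" using cl_1245 cl_1567 ta_35 d_ei_357 cl_1347 d_ei_134 ha hs by linarith
      have s_B34: "B 3 4 = - B 5 6 + C 4 4 + C 6 6" using cl_1246 ha hs by linarith
      have s_B35: "B 3 5 = - 2 * A 3 4 - 2 * A 4 3 + C 3 6" using cl_1367 cl_1234 cl_1457 cl_2357 cl_2467 d_ei_235 d_ei_136 ha hs by linarith
      have s_A63: "A 6 3 = - A 5 4" using cl_1347 d_ei_134 ha hs by linarith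
      have s_B63: "B 6 3 = - A 4 4 - A 6 6 - (1/3) * b - w" using cl_1357 ta_12 d_ei_135 d_ei_127 ha hs by linarith
      have s_B46: "B 4 6 = 2 * A 5 6 + 2 * A 6 5 - C 3 6" using cl_1367 cl_1234 cl_1457 cl_2357 cl_2467 d_ei_235 d_ei_145 ha hs by linarith
      have s_y: "y = - A 4 3 - A 6 5 + (1/2) * C 3 6" using cl_1457 cl_1367 cl_1234 cl_2357 cl_2467 d_ei_235 d_ei_145 d_ei_136 ha hs by linarith
      have s_B54: "B 5 4 = A 4 4 + A 6 6 + (8/3) * b - w" using cl_1467 d_ei_127 d_ei_146 ha hs by linarith
      have s_B55: "B 5 5 = (1/2) * A 5 4 + (1/2) * C 5 6 + (1/2) * C 6 5" using cl_1567 ta_35 cl_1245 d_ei_357 cl_1347 d_ei_134 ha hs by linarith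
      have s_C33: "C 3 3 = - C 4 4" using d_ei_234 ha hs by linarith
      have s_C63: "C 6 3 = - A 3 4 - A 4 3 - A 5 6 - A 6 5 + (1/2) * C 3 6" using cl_2357 d_ei_145 d_ei_136 cl_1234 cl_2467 cl_1256 d_ei_235 ha hs by linarith
      have s_C53: "C 5 3 = - A 4 4 + A 6 6 + w" using cl_2367 ta_12 d_ei_245 cl_2457 d_ei_146 cl_1467 d_ei_127 d_ei_135 cl_1357 ta_34 ha hs by linarith
      have s_C64: "C 6 4 = - A 4 4 + A 6 6 - b - w" using cl_2457 d_ei_146 cl_1467 d_ei_127 d_ei_135 cl_1357 ta_12 ta_34 d_ei_236 cl_2367 d_ei_245 ha hs by linarith
      have s_C54: "C 5 4 = (1/2) * C 3 6" using d_ei_235 d_ei_145 d_ei_136 cl_1234 cl_1256 ha hs by linarith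
      have s_C55: "C 5 5 = - C 6 6" using d_ei_234 ta_17 ha hs by linarith
      have s_A33: "A 3 3 = - A 4 4 - 2 * b" using ta_12 d_ei_245 cl_2457 d_ei_146 cl_1467 d_ei_127 d_ei_135 cl_1357 ta_34 d_ei_236 cl_2367 ha hs by linarith
      have s_A53: "A 5 3 = A 6 4" using cl_2347 d_ei_234 ha hs by linarith
      have s_C43: "C 4 3 = C 3 4 + C 5 6 - C 6 5" using ta_27 cl_1236 cl_1245 ha hs by linarith
      have s_B45: "B 4 5 = - 2 * A 4 4 - 2 * A 6 6 - (8/3) * b - 2 * w" using d_ei_127 d_ei_135 cl_1357 ta_12 ha hs by linarith
      have s_B66: "B 6 6 = - (1/2) * A 5 4 - (1/2) * C 5 6 - (1/2) * C 6 5" using ta_35 cl_1245 cl_1567 ta_27 d_ei_357 cl_1347 ha hs by linarith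
      have s_B65: "B 6 5 = A 6 4 - B 5 6 + 2 * C 6 6" using ta_36 cl_1246 cl_2567 d_ei_367 cl_2347 d_ei_234 ha hs by linarith
      have s_x: "x = (2/3) * b - w" using d_ei_127 ha hs by linarith
      have s_A36: "A 3 6 = 2 * A 5 4" using d_ei_134 ta_27 cl_1567 d_ei_357 cl_1347 ha hs by linarith
      have s_B36: "B 3 6 = 2 * A 4 4 + 2 * A 6 6 + (10/3) * b - 2 * w" using d_ei_127 d_ei_146 cl_1467 ha hs by linarith
      have s_B64: "B 6 4 = A 3 4 + A 4 3 - (1/2) * C 3 6" using cl_1234 cl_2357 cl_2467 cl_1367 cl_1457 d_ei_145 d_ei_235 d_ei_136 ha hs by linarith
      have s_C45: "C 4 5 = - 2 * A 3 4 - 2 * A 4 3 - 2 * A 5 6 - 2 * A 6 5 + C 3 6" using d_ei_145 d_ei_136 cl_1234 cl_2357 cl_2467 cl_1256 d_ei_235 ha hs by linarith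
      have s_C35: "C 3 5 = 2 * A 4 4 - 2 * A 6 6 + 2 * w" using d_ei_146 cl_1467 d_ei_127 d_ei_135 cl_1357 ta_12 ta_34 d_ei_236 cl_2367 d_ei_245 cl_2457 ha hs by linarith
      have s_A35: "A 3 5 = - 2 * A 6 4" using d_ei_234 ta_17 cl_2567 d_ei_367 cl_2347 ha hs by linarith
      have s_z: "z = - A 3 4 - A 5 6 + (1/2) * C 3 6" using d_ei_235 d_ei_145 d_ei_136 cl_1234 cl_2467 cl_1256 ha hs by linarith
      have s_C46: "C 4 6 = 2 * A 4 4 - 2 * A 6 6 + 2 * b - 2 * w" using d_ei_236 cl_2367 ta_12 d_ei_245 cl_2457 d_ei_146 cl_1467 d_ei_127 d_ei_135 cl_1357 ta_34 ha hs by linarith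
      have s_A55: "A 5 5 = - A 6 6 - b" using d_ei_245 cl_2457 d_ei_146 cl_1467 d_ei_127 d_ei_135 cl_1357 ta_12 ta_34 d_ei_236 cl_2367 ha hs by linarith
      have s_A45: "A 4 5 = - 2 * A 5 4" using d_ei_357 cl_1347 d_ei_134 ha hs by linarith
      have s_A46: "A 4 6 = - 2 * A 6 4" using d_ei_367 cl_2347 d_ei_234 ha hs by linarith
      have q_jbc_34: "- 2 * A 3 4 * C 3 6 - 2 * A 4 3 * C 3 6 - (32/3) * A 4 4 * b - 4 * A 4 4^2 + A 5 4 * C 3 4 + (20/3) * A 6 6 * b - 8 * A 6 6 * w + 4 * A 6 6^2 - 2 * B 5 6 * C 4 4 + C 3 4 * C 5 6 - C 3 4 * C 6 5 + 2 * C 3 4^2 + C 3 6^2 + 2 * C 4 4 * C 6 6 + 2 * C 4 4^2 - (20/3) * b * w - (10/3) * b^2 + 4 * w^2 = 0" using jbc_34 unfolding s_B33 s_B44 s_B34 s_B35 s_B54 s_C33 s_C64 s_C54 s_B36 s_B64 s_C35 by algebra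
      have q_jac_35: "- 4 * A 3 4 * A 4 3 - 4 * A 3 4 * A 5 6 - 2 * A 3 4 * A 6 5 + 3 * A 3 4 * C 3 6 - 4 * A 3 4^2 - 2 * A 4 3 * A 5 6 + A 4 3 * C 3 6 + 4 * A 4 4 * A 6 6 - 2 * A 4 4 * b - 4 * A 4 4 * w - 2 * A 4 4^2 + 2 * A 5 4 * C 3 4 + 2 * A 5 4 * C 6 5 + A 5 6 * C 3 6 - 2 * A 6 4 * C 4 4 + 2 * A 6 4 * C 6 6 - A 6 5 * C 3 6 + 2 * A 6 6 * b + 4 * A 6 6 * w - 2 * A 6 6^2 - (1/2) * C 3 6^2 - 2 * b * w - 2 * w^2 = 0" using jac_35 unfolding s_B35 s_C33 s_C55 s_A33 s_A36 s_C45 s_C35 s_A35 s_z s_A55 s_A45 by algebra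
      have q_jab_36: "4 * A 3 4 * A 5 6 + 2 * A 3 4 * A 6 5 - A 3 4 * C 3 6 + 2 * A 4 3 * A 5 6 + A 4 3 * C 3 6 - 4 * A 4 4 * A 6 6 - (26/3) * A 4 4 * b + 4 * A 4 4 * w - 2 * A 4 4^2 - 2 * A 5 4 * C 3 4 - 2 * A 5 4 * C 5 6 - 2 * A 5 4^2 - A 5 6 * C 3 6 - 4 * A 6 4 * B 5 6 + 2 * A 6 4 * C 4 4 + 2 * A 6 4 * C 6 6 + A 6 5 * C 3 6 - (26/3) * A 6 6 * b + 4 * A 6 6 * w - 2 * A 6 6^2 - (1/2) * C 3 6^2 + (26/3) * b * w - (80/9) * b^2 - 2 * w^2 = 0" using jab_36 unfolding s_B33 s_B34 s_B35 s_B46 s_y s_A33 s_B66 s_x s_A36 s_B36 s_A35 s_A46 by algebra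
      have q_jbc_43: "- 4 * A 3 4 * A 5 6 - 4 * A 3 4 * A 6 5 + 2 * A 3 4 * C 3 6 - 4 * A 4 3 * A 5 6 - 4 * A 4 3 * A 6 5 + 2 * A 4 3 * C 3 6 + (16/3) * A 4 4 * b + 4 * A 4 4^2 - A 5 4 * C 3 4 - A 5 4 * C 5 6 + A 5 4 * C 6 5 - 8 * A 5 6 * A 6 5 + 4 * A 5 6 * C 3 6 - 4 * A 5 6^2 + 2 * A 6 4 * C 4 4 + 4 * A 6 5 * C 3 6 - 4 * A 6 5^2 - (4/3) * A 6 6 * b - 8 * A 6 6 * w - 4 * A 6 6^2 - 2 * B 5 6 * C 4 4 - 3 * C 3 4 * C 5 6 + 3 * C 3 4 * C 6 5 - 2 * C 3 4^2 - C 3 6^2 + 2 * C 4 4 * C 6 6 - 2 * C 4 4^2 + 2 * C 5 6 * C 6 5 - C 5 6^2 - C 6 5^2 - (4/3) * b * w + (2/3) * b^2 - 4 * w^2 = 0" using jbc_43 unfolding s_B53 s_B43 s_B33 s_B44 s_B63 s_B46 s_C33 s_C63 s_C53 s_C43 s_B45 s_C45 s_C46 by algebra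
      have q_jab_45: "- 4 * A 3 4 * A 4 3 - 2 * A 3 4 * A 6 5 + A 3 4 * C 3 6 - 2 * A 4 3 * A 5 6 - 4 * A 4 3 * A 6 5 + 3 * A 4 3 * C 3 6 - 4 * A 4 3^2 - 4 * A 4 4 * A 6 6 - (10/3) * A 4 4 * b - 4 * A 4 4 * w - 2 * A 4 4^2 - 2 * A 5 4 * C 3 4 - 2 * A 5 4 * C 5 6 - 2 * A 5 4^2 - 4 * A 5 6 * A 6 5 + A 5 6 * C 3 6 + 4 * A 6 4 * B 5 6 + 2 * A 6 4 * C 4 4 - 6 * A 6 4 * C 6 6 - 4 * A 6 4^2 + 3 * A 6 5 * C 3 6 - 4 * A 6 5^2 - (10/3) * A 6 6 * b - 4 * A 6 6 * w - 2 * A 6 6^2 - (1/2) * C 3 6^2 - (10/3) * b * w - (8/9) * b^2 - 2 * w^2 = 0" using jab_45 unfolding s_B43 s_B44 s_B35 s_B46 s_y s_B55 s_B45 s_B65 s_x s_C45 s_A35 s_A55 s_A45 s_A46 by algebra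
      have q_jac_46: "4 * A 3 4 * A 5 6 + 2 * A 3 4 * A 6 5 - A 3 4 * C 3 6 + 2 * A 4 3 * A 5 6 + A 4 3 * C 3 6 - 4 * A 4 4 * A 6 6 + 2 * A 4 4 * b - 4 * A 4 4 * w + 2 * A 4 4^2 - 2 * A 5 4 * C 3 4 - 4 * A 5 4 * C 5 6 + 2 * A 5 4 * C 6 5 + 4 * A 5 6 * A 6 5 - 3 * A 5 6 * C 3 6 + 4 * A 5 6^2 + 2 * A 6 4 * C 4 4 - 2 * A 6 4 * C 6 6 - A 6 5 * C 3 6 - 2 * A 6 6 * b + 4 * A 6 6 * w + 2 * A 6 6^2 + (1/2) * C 3 6^2 - 2 * b * w + 2 * w^2 = 0" using jac_46 unfolding s_B46 s_C43 s_A36 s_C45 s_z s_C46 s_A45 s_A46 by algebra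
      have q_jac_53: "- 2 * A 3 4 * A 5 6 - A 3 4 * A 6 5 + (1/2) * A 3 4 * C 3 6 - A 4 3 * A 5 6 - (1/2) * A 4 3 * C 3 6 + 2 * A 4 4 * A 6 6 - A 4 4 * b + 2 * A 4 4 * w - A 4 4^2 + A 5 4 * C 3 4 + 2 * A 5 4 * C 5 6 - A 5 4 * C 6 5 - 2 * A 5 6 * A 6 5 + (3/2) * A 5 6 * C 3 6 - 2 * A 5 6^2 - A 6 4 * C 4 4 + A 6 4 * C 6 6 + (1/2) * A 6 5 * C 3 6 + A 6 6 * b - 2 * A 6 6 * w - A 6 6^2 - (1/4) * C 3 6^2 + b * w - w^2 = 0" using jac_53 unfolding s_B53 s_A63 s_C33 s_C63 s_C53 s_C54 s_C55 s_A33 s_A53 s_C43 s_z s_A55 by algebra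
      have q_jbc_56: "(32/3) * A 4 4 * b - 8 * A 4 4 * w + 4 * A 4 4^2 + A 5 4 * C 5 6 - 2 * A 5 6 * C 3 6 - 2 * A 6 5 * C 3 6 - (20/3) * A 6 6 * b - 4 * A 6 6^2 + 2 * B 5 6 * C 6 6 + C 3 6^2 + C 5 6 * C 6 5 + C 5 6^2 - (32/3) * b * w + (16/3) * b^2 + 4 * w^2 = 0" using jbc_56 unfolding s_B53 s_B46 s_B54 s_B55 s_C53 s_C54 s_C55 s_B66 s_B36 s_C46 by algebra
      have q_jbc_65: "- 8 * A 3 4 * A 4 3 - 4 * A 3 4 * A 5 6 - 4 * A 3 4 * A 6 5 + 4 * A 3 4 * C 3 6 - 4 * A 3 4^2 - 4 * A 4 3 * A 5 6 - 4 * A 4 3 * A 6 5 + 4 * A 4 3 * C 3 6 - 4 * A 4 3^2 - (16/3) * A 4 4 * b - 8 * A 4 4 * w - 4 * A 4 4^2 - A 5 4 * C 6 5 + 2 * A 5 6 * C 3 6 - 2 * A 6 4 * C 6 6 + 2 * A 6 5 * C 3 6 + (4/3) * A 6 6 * b + 4 * A 6 6^2 + 2 * B 5 6 * C 6 6 - C 3 6^2 - C 5 6 * C 6 5 - C 6 5^2 - 4 * C 6 6^2 - (16/3) * b * w - (8/3) * b^2 - 4 * w^2 = 0" using jbc_65 unfolding s_B35 s_B63 s_B55 s_C63 s_C64 s_C55 s_B45 s_B66 s_B65 s_B64 s_C45 s_C35 by algebra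
      have fin: "b^2 + (87 * (A 3 4 + A 4 3 + (22/29) * A 5 6 + (22/29) * A 6 5 - (22/29) * C 3 6)^2 + 84 * (A 4 4 + b)^2 + 40 * (A 5 4 + (9/32) * C 3 4 + (23/80) * C 5 6 + (1/160) * C 6 5)^2 + (1013/29) * (A 5 6 + A 6 5 - (462/1013) * C 3 6)^2 + 40 * (A 6 4 - (9/32) * C 4 4 + (47/160) * C 6 6)^2 + 76 * (A 6 6 + (1/2) * b)^2 + (5355/128) * (C 3 4 + (274/595) * C 5 6 - (321/595) * C 6 5)^2 + (8778/1013) * (C 3 6)^2 + (5355/128) * (C 4 4 + (47/595) * C 6 6)^2 + (6439/595) * (C 5 6 + C 6 5)^2 + (25756/595) * (C 6 6)^2 + 264 * (- (1/3) * b + w)^2 + (121/9) * (b)^2) = 0"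
      proof -
        have "b^2 + (87 * (A 3 4 + A 4 3 + (22/29) * A 5 6 + (22/29) * A 6 5 - (22/29) * C 3 6)^2 + 84 * (A 4 4 + b)^2 + 40 * (A 5 4 + (9/32) * C 3 4 + (23/80) * C 5 6 + (1/160) * C 6 5)^2 + (1013/29) * (A 5 6 + A 6 5 - (462/1013) * C 3 6)^2 + 40 * (A 6 4 - (9/32) * C 4 4 + (47/160) * C 6 6)^2 + 76 * (A 6 6 + (1/2) * b)^2 + (5355/128) * (C 3 4 + (274/595) * C 5 6 - (321/595) * C 6 5)^2 + (8778/1013) * (C 3 6)^2 + (5355/128) * (C 4 4 + (47/595) * C 6 6)^2 + (6439/595) * (C 5 6 + C 6 5)^2 + (25756/595) * (C 6 6)^2 + 264 * (- (1/3) * b + w)^2 + (121/9) * (b)^2) = - ((-45/4) * (- 2 * A 3 4 * C 3 6 - 2 * A 4 3 * C 3 6 - (32/3) * A 4 4 * b - 4 * A 4 4^2 + A 5 4 * C 3 4 + (20/3) * A 6 6 * b - 8 * A 6 6 * w + 4 * A 6 6^2 - 2 * B 5 6 * C 4 4 + C 3 4 * C 5 6 - C 3 4 * C 6 5 + 2 * C 3 4^2 + C 3 6^2 + 2 * C 4 4 * C 6 6 + 2 * C 4 4^2 - (20/3) * b * w - (10/3) * b^2 + 4 * w^2) + 10 * (- 4 * A 3 4 * A 4 3 - 4 * A 3 4 * A 5 6 - 2 * A 3 4 * A 6 5 + 3 * A 3 4 * C 3 6 - 4 * A 3 4^2 - 2 * A 4 3 * A 5 6 + A 4 3 * C 3 6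 + 4 * A 4 4 * A 6 6 - 2 * A 4 4 * b - 4 * A 4 4 * w - 2 * A 4 4^2 + 2 * A 5 4 * C 3 4 + 2 * A 5 4 * C 6 5 + A 5 6 * C 3 6 - 2 * A 6 4 * C 4 4 + 2 * A 6 4 * C 6 6 - A 6 5 * C 3 6 + 2 * A 6 6 * b + 4 * A 6 6 * w - 2 * A 6 6^2 - (1/2) * C 3 6^2 - 2 * b * w - 2 * w^2) + 10 * (4 * A 3 4 * A 5 6 + 2 * A 3 4 * A 6 5 - A 3 4 * C 3 6 + 2 * A 4 3 * A 5 6 + A 4 3 * C 3 6 - 4 * A 4 4 * A 6 6 - (26/3) * A 4 4 * b + 4 * A 4 4 * w - 2 * A 4 4^2 - 2 * A 5 4 * C 3 4 - 2 * A 5 4 * C 5 6 - 2 * A 5 4^2 - A 5 6 * C 3 6 - 4 * A 6 4 * B 5 6 + 2 * A 6 4 * C 4 4 + 2 * A 6 4 * C 6 6 + A 6 5 * C 3 6 - (26/3) * A 6 6 * b + 4 * A 6 6 * w - 2 * A 6 6^2 - (1/2) * C 3 6^2 + (26/3) * b * w - (80/9) * b^2 - 2 * w^2) + (45/4) * (- 4 * A 3 4 * A 5 6 - 4 * A 3 4 * A 6 5 + 2 * A 3 4 * C 3 6 - 4 * A 4 3 * A 5 6 - 4 * A 4 3 * A 6 5 + 2 * A 4 3 * C 3 6 + (16/3) * A 4 4 * b + 4 * A 4 4^2 - A 5 4 * C 3 4 - A 5 4 * C 5 6 + A 5 4 * C 6 5 - 8 * A 5 6 * A 6 5 + 4 *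 A 5 6 * C 3 6 - 4 * A 5 6^2 + 2 * A 6 4 * C 4 4 + 4 * A 6 5 * C 3 6 - 4 * A 6 5^2 - (4/3) * A 6 6 * b - 8 * A 6 6 * w - 4 * A 6 6^2 - 2 * B 5 6 * C 4 4 - 3 * C 3 4 * C 5 6 + 3 * C 3 4 * C 6 5 - 2 * C 3 4^2 - C 3 6^2 + 2 * C 4 4 * C 6 6 - 2 * C 4 4^2 + 2 * C 5 6 * C 6 5 - C 5 6^2 - C 6 5^2 - (4/3) * b * w + (2/3) * b^2 - 4 * w^2) + 10 * (- 4 * A 3 4 * A 4 3 - 2 * A 3 4 * A 6 5 + A 3 4 * C 3 6 - 2 * A 4 3 * A 5 6 - 4 * A 4 3 * A 6 5 + 3 * A 4 3 * C 3 6 - 4 * A 4 3^2 - 4 * A 4 4 * A 6 6 - (10/3) * A 4 4 * b - 4 * A 4 4 * w - 2 * A 4 4^2 - 2 * A 5 4 * C 3 4 - 2 * A 5 4 * C 5 6 - 2 * A 5 4^2 - 4 * A 5 6 * A 6 5 + A 5 6 * C 3 6 + 4 * A 6 4 * B 5 6 + 2 * A 6 4 * C 4 4 - 6 * A 6 4 * C 6 6 - 4 * A 6 4^2 + 3 * A 6 5 * C 3 6 - 4 * A 6 5^2 - (10/3) * A 6 6 * b - 4 * A 6 6 * w - 2 * A 6 6^2 - (1/2) * C 3 6^2 - (10/3) * b * w - (8/9) * b^2 - 2 * w^2) + -8 * (4 * A 3 4 * A 5 6 + 2 * A 3 4 * A 6 5 - A 3 4 * C 3 6 + 2 * A 4 3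 * A 5 6 + A 4 3 * C 3 6 - 4 * A 4 4 * A 6 6 + 2 * A 4 4 * b - 4 * A 4 4 * w + 2 * A 4 4^2 - 2 * A 5 4 * C 3 4 - 4 * A 5 4 * C 5 6 + 2 * A 5 4 * C 6 5 + 4 * A 5 6 * A 6 5 - 3 * A 5 6 * C 3 6 + 4 * A 5 6^2 + 2 * A 6 4 * C 4 4 - 2 * A 6 4 * C 6 6 - A 6 5 * C 3 6 - 2 * A 6 6 * b + 4 * A 6 6 * w + 2 * A 6 6^2 + (1/2) * C 3 6^2 - 2 * b * w + 2 * w^2) + 4 * (- 2 * A 3 4 * A 5 6 - A 3 4 * A 6 5 + (1/2) * A 3 4 * C 3 6 - A 4 3 * A 5 6 - (1/2) * A 4 3 * C 3 6 + 2 * A 4 4 * A 6 6 - A 4 4 * b + 2 * A 4 4 * w - A 4 4^2 + A 5 4 * C 3 4 + 2 * A 5 4 * C 5 6 - A 5 4 * C 6 5 - 2 * A 5 6 * A 6 5 + (3/2) * A 5 6 * C 3 6 - 2 * A 5 6^2 - A 6 4 * C 4 4 + A 6 4 * C 6 6 + (1/2) * A 6 5 * C 3 6 + A 6 6 * b - 2 * A 6 6 * w - A 6 6^2 - (1/4) * C 3 6^2 + b * w - w^2) + (-47/4) * ((32/3) * A 4 4 * b - 8 * A 4 4 * w + 4 * A 4 4^2 + A 5 4 * C 5 6 - 2 * A 5 6 * C 3 6 - 2 * A 6 5 * C 3 6 - (20/3) * A 6 6 * b - 4 * A 6 6^2 + 2 * B 5 6 * C 6 6 + C 3 6^2 + C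 5 6 * C 6 5 + C 5 6^2 - (32/3) * b * w + (16/3) * b^2 + 4 * w^2) + (47/4) * (- 8 * A 3 4 * A 4 3 - 4 * A 3 4 * A 5 6 - 4 * A 3 4 * A 6 5 + 4 * A 3 4 * C 3 6 - 4 * A 3 4^2 - 4 * A 4 3 * A 5 6 - 4 * A 4 3 * A 6 5 + 4 * A 4 3 * C 3 6 - 4 * A 4 3^2 - (16/3) * A 4 4 * b - 8 * A 4 4 * w - 4 * A 4 4^2 - A 5 4 * C 6 5 + 2 * A 5 6 * C 3 6 - 2 * A 6 4 * C 6 6 + 2 * A 6 5 * C 3 6 + (4/3) * A 6 6 * b + 4 * A 6 6^2 + 2 * B 5 6 * C 6 6 - C 3 6^2 - C 5 6 * C 6 5 - C 6 5^2 - 4 * C 6 6^2 - (16/3) * b * w - (8/3) * b^2 - 4 * w^2))" by algebra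
        also have "\<dots> = 0" by (simp only: q_jbc_34 q_jac_35 q_jab_36 q_jbc_43 q_jab_45 q_jac_46 q_jac_53 q_jbc_56 q_jbc_65; simp)
        finally show ?thesis .
      qed
      have "0 \<le> 87 * (A 3 4 + A 4 3 + (22/29) * A 5 6 + (22/29) * A 6 5 - (22/29) * C 3 6)^2 + 84 * (A 4 4 + b)^2 + 40 * (A 5 4 + (9/32) * C 3 4 + (23/80) * C 5 6 + (1/160) * C 6 5)^2 + (1013/29) * (A 5 6 + A 6 5 - (462/1013) * C 3 6)^2 + 40 * (A 6 4 - (9/32) * C 4 4 + (47/160) * C 6 6)^2 + 76 * (A 6 6 + (1/2) * b)^2 + (5355/128) * (C 3 4 + (274/595) * C 5 6 - (321/595) * C 6 5)^2 + (8778/1013) * (C 3 6)^2 + (5355/128) * (C 4 4 + (47/595) * C 6 6)^2 + (6439/595) * (C 5 6 + C 6 5)^2 + (25756/595) * (C 6 6)^2 + 264 * (- (1/3) * b + w)^2 + (121/9) * (b)^2" by simp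
      moreover have "0 < b^2" using hb0 by simp
      ultimately show False using fin by linarith
    next
      assume hs: "b = 2*c"
      have ha: "a = -3*c" using abc hs by linarith
      have hlam: "lam = 2*c^2"
      proof -
        have "lam = b * c" by (simp add: hbc)
        also have "\<dots> = 2*c^2" by (simp add: hs power2_eq_square algebra_simps)
        finally show ?thesis .
      qed
      have d_ei_127: "- 2 * c + 3 * w + 3 * x = 0"
      proof (rule divb[OF hc0])
        show "c * (- 2 * c + 3 * w + 3 * x) = 0" using ei_127 ha hs hlam by algebra
      qed
      have d_ei_134: "- 2 * B 3 3 - 2 * B 4 4 = 0"
      proof (rule divb[OF hc0])
        show "c * (- 2 * B 3 3 - 2 * B 4 4) = 0" using ei_134 ha hs hlam by algebra
      qed
      have d_ei_135: "- 2 * B 4 5 + B 6 3 - 2 * c = 0"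
      proof (rule divb[OF hc0])
        show "c * (- 2 * B 4 5 + B 6 3 - 2 * c) = 0" using ei_135 ha hs hlam by algebra
      qed
      have d_ei_136: "- 2 * B 4 6 - B 5 3 = 0"
      proof (rule divb[OF hc0])
        show "c * (- 2 * B 4 6 - B 5 3) = 0" using ei_136 ha hs hlam by algebra
      qed
      have d_ei_145: "2 * B 3 5 + B 6 4 = 0"
      proof (rule divb[OF hc0])
        show "c * (2 * B 3 5 + B 6 4) = 0" using ei_145 ha hs hlam by algebra
      qed
      have d_ei_146: "2 * B 3 6 - B 5 4 + 2 * c = 0"
      proof (rule divb[OF hc0])
        show "c * (2 * B 3 6 - B 5 4 + 2 * c) = 0" using ei_146 ha hs hlam by algebra
      qed
      have d_ei_156: "- B 5 5 - B 6 6 = 0"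
      proof (rule divb[OF hc0])
        show "c * (- B 5 5 - B 6 6) = 0" using ei_156 ha hs hlam by algebra
      qed
      have d_ei_234: "- 2 * C 3 3 - 2 * C 4 4 = 0"
      proof (rule divb[OF hc0])
        show "c * (- 2 * C 3 3 - 2 * C 4 4) = 0" using ei_234 ha hs hlam by algebra
      qed
      have d_ei_235: "- 2 * C 4 5 + C 6 3 = 0"
      proof (rule divb[OF hc0])
        show "c * (- 2 * C 4 5 + C 6 3) = 0" using ei_235 ha hs hlam by algebra
      qed
      have d_ei_236: "- 2 * C 4 6 - C 5 3 + 2 * c = 0"
      proof (rule divb[OF hc0])
        show "c * (- 2 * C 4 6 - C 5 3 + 2 * c) = 0" using ei_236 ha hs hlam by algebra
      qed
      have d_ei_245: "2 * C 3 5 + C 6 4 + 2 * c = 0"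
      proof (rule divb[OF hc0])
        show "c * (2 * C 3 5 + C 6 4 + 2 * c) = 0" using ei_245 ha hs hlam by algebra
      qed
      have d_ei_246: "2 * C 3 6 - C 5 4 = 0"
      proof (rule divb[OF hc0])
        show "c * (2 * C 3 6 - C 5 4) = 0" using ei_246 ha hs hlam by algebra
      qed
      have d_ei_256: "- C 5 5 - C 6 6 = 0"
      proof (rule divb[OF hc0])
        show "c * (- C 5 5 - C 6 6) = 0" using ei_256 ha hs hlam by algebra
      qed
      have d_ei_347: "- 2 * A 3 3 - 2 * A 4 4 - 2 * c = 0"
      proof (rule divb[OF hc0])
        show "c * (- 2 * A 3 3 - 2 * A 4 4 - 2 * c) = 0" using ei_347 ha hs hlam by algebra
      qed
      have d_ei_357: "- 2 * A 4 5 + A 6 3 = 0"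
      proof (rule divb[OF hc0])
        show "c * (- 2 * A 4 5 + A 6 3) = 0" using ei_357 ha hs hlam by algebra
      qed
      have d_ei_367: "- 2 * A 4 6 - A 5 3 = 0"
      proof (rule divb[OF hc0])
        show "c * (- 2 * A 4 6 - A 5 3) = 0" using ei_367 ha hs hlam by algebra
      qed
      have d_ei_457: "2 * A 3 5 + A 6 4 = 0"
      proof (rule divb[OF hc0])
        show "c * (2 * A 3 5 + A 6 4) = 0" using ei_457 ha hs hlam by algebra
      qed
      have d_ei_467: "2 * A 3 6 - A 5 4 = 0"
      proof (rule divb[OF hc0])
        show "c * (2 * A 3 6 - A 5 4) = 0" using ei_467 ha hs hlam by algebra
      qed
      have d_ei_567: "- A 5 5 - A 6 6 - 2 * c = 0"
      proof (rule divb[OF hc0])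
        show "c * (- A 5 5 - A 6 6 - 2 * c) = 0" using ei_567 ha hs hlam by algebra
      qed
      have s_B53: "B 5 3 = - 2 * A 3 4 + 2 * A 6 5 - 2 * z" using cl_1234 cl_2357 cl_2467 d_ei_136 cl_1367 cl_1457 cl_1256 ha hs by linarith
      have s_B43: "B 4 3 = (1/2) * A 6 4 + B 5 6 + C 4 4 - C 6 6" using cl_1235 ta_17 ta_36 cl_1246 cl_2567 d_ei_367 cl_2347 d_ei_234 ha hs by linarith
      have s_B33: "B 3 3 = - (1/4) * A 5 4 + C 3 4 + (1/2) * C 5 6 - (1/2) * C 6 5" using cl_1245 ta_35 cl_1567 d_ei_134 d_ei_357 cl_1347 ha hs by linarith
      have s_B44: "B 4 4 = (1/4) * A 5 4 - C 3 4 - (1/2) * C 5 6 + (1/2) * C 6 5" using cl_1245 cl_1567 ta_35 d_ei_357 cl_1347 d_ei_134 ha hs by linarith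
      have s_B34: "B 3 4 = - B 5 6 + C 4 4 + C 6 6" using cl_1246 ha hs by linarith
      have s_B35: "B 3 5 = A 4 3 - A 5 6 - z" using cl_1256 cl_1367 cl_1234 cl_1457 cl_2357 cl_2467 d_ei_145 ha hs by linarith
      have s_A63: "A 6 3 = - A 5 4" using cl_1347 d_ei_134 ha hs by linarith
      have s_B63: "B 6 3 = 2 * A 4 4 + 2 * A 6 6 + (8/3) * c + 2 * w" using cl_1357 ta_12 d_ei_135 d_ei_127 ha hs by linarith
      have s_B46: "B 4 6 = A 3 4 - A 6 5 + z" using cl_1367 cl_1234 cl_1457 cl_1256 cl_2357 cl_2467 d_ei_136 ha hs by linarith
      have s_y: "y = A 3 4 - A 4 3 + A 5 6 - A 6 5 + z" using cl_1457 cl_1256 cl_1367 cl_1234 cl_2357 cl_2467 ha hs by linarith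
      have s_B54: "B 5 4 = - 2 * A 4 4 - 2 * A 6 6 - (10/3) * c + 2 * w" using cl_1467 d_ei_127 d_ei_146 ha hs by linarith
      have s_B55: "B 5 5 = - (1/4) * A 5 4 + (1/2) * C 5 6 + (1/2) * C 6 5" using cl_1567 ta_35 cl_1245 d_ei_357 cl_1347 d_ei_134 ha hs by linarith
      have s_C33: "C 3 3 = - C 4 4" using d_ei_234 ha hs by linarith
      have s_C63: "C 6 3 = 2 * A 4 3 + 2 * A 6 5 - 2 * z" using cl_2357 d_ei_235 ha hs by linarith
      have s_C53: "C 5 3 = 2 * A 4 4 - 2 * A 6 6 - 2 * w" using cl_2367 ta_12 d_ei_236 d_ei_245 cl_2457 d_ei_146 cl_1467 d_ei_127 d_ei_135 cl_1357 ta_34 ha hs by linarith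
      have s_C64: "C 6 4 = 2 * A 4 4 - 2 * A 6 6 - 2 * c + 2 * w" using d_ei_146 cl_1467 d_ei_127 d_ei_135 cl_1357 ta_12 ta_34 d_ei_236 cl_2367 d_ei_245 ha hs by linarith
      have s_C54: "C 5 4 = - 2 * A 3 4 - 2 * A 5 6 - 2 * z" using cl_2467 d_ei_235 d_ei_145 d_ei_136 cl_1256 cl_1234 ha hs by linarith
      have s_C55: "C 5 5 = - C 6 6" using d_ei_234 ta_17 ha hs by linarith
      have s_A33: "A 3 3 = - A 4 4 - c" using ta_12 d_ei_245 cl_2457 d_ei_146 cl_1467 d_ei_127 d_ei_135 cl_1357 ta_34 d_ei_236 cl_2367 ha hs by linarith
      have s_A53: "A 5 3 = A 6 4" using cl_2347 d_ei_234 ha hs by linarith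
      have s_C43: "C 4 3 = C 3 4 + C 5 6 - C 6 5" using ta_27 cl_1236 cl_1245 ha hs by linarith
      have s_B45: "B 4 5 = A 4 4 + A 6 6 + (1/3) * c + w" using d_ei_127 d_ei_135 cl_1357 ta_12 ha hs by linarith
      have s_B66: "B 6 6 = (1/4) * A 5 4 - (1/2) * C 5 6 - (1/2) * C 6 5" using ta_35 cl_1245 cl_1567 d_ei_134 ta_27 d_ei_357 cl_1347 ha hs by linarith
      have s_B65: "B 6 5 = - (1/2) * A 6 4 - B 5 6 + 2 * C 6 6" using ta_36 cl_1246 cl_2567 d_ei_367 cl_2347 d_ei_234 ha hs by linarith
      have s_x: "x = (2/3) * c - w" using d_ei_127 ha hs by linarith
      have s_A36: "A 3 6 = (1/2) * A 5 4" using d_ei_134 ta_27 cl_1567 d_ei_357 cl_1347 ha hs by linarith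
      have s_B36: "B 3 6 = - A 4 4 - A 6 6 - (8/3) * c + w" using d_ei_127 d_ei_146 cl_1467 ha hs by linarith
      have s_B64: "B 6 4 = - 2 * A 4 3 + 2 * A 5 6 + 2 * z" using cl_1367 cl_1457 cl_1256 d_ei_145 cl_1234 cl_2357 cl_2467 ha hs by linarith
      have s_C45: "C 4 5 = A 4 3 + A 6 5 - z" using cl_2357 d_ei_235 ha hs by linarith
      have s_C35: "C 3 5 = - A 4 4 + A 6 6 - w" using d_ei_146 cl_1467 d_ei_127 d_ei_135 cl_1357 ta_12 ta_34 d_ei_236 cl_2367 ha hs by linarith
      have s_A35: "A 3 5 = - (1/2) * A 6 4" using d_ei_234 ta_17 cl_2567 d_ei_367 cl_2347 ha hs by linarith
      have s_C36: "C 3 6 = - A 3 4 - A 5 6 - z" using d_ei_235 d_ei_145 d_ei_136 cl_1256 cl_1234 cl_2467 ha hs by linarith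
      have s_C46: "C 4 6 = - A 4 4 + A 6 6 + c + w" using d_ei_236 cl_2367 ta_12 d_ei_245 cl_2457 d_ei_146 cl_1467 d_ei_127 d_ei_135 cl_1357 ta_34 ha hs by linarith
      have s_A55: "A 5 5 = - A 6 6 - 2 * c" using d_ei_245 cl_2457 d_ei_146 cl_1467 d_ei_127 d_ei_135 cl_1357 ta_12 ta_34 d_ei_236 cl_2367 ha hs by linarith
      have s_A45: "A 4 5 = - (1/2) * A 5 4" using d_ei_357 cl_1347 d_ei_134 ha hs by linarith
      have s_A46: "A 4 6 = - (1/2) * A 6 4" using d_ei_367 cl_2347 d_ei_234 ha hs by linarith
      have q_jbc_34: "- 4 * A 3 4 * A 4 3 + 4 * A 3 4 * A 5 6 + 4 * A 3 4 * z - 4 * A 4 3 * A 5 6 - 4 * A 4 3 * z - (20/3) * A 4 4 * c - 4 * A 4 4^2 - (1/2) * A 5 4 * C 3 4 + 8 * A 5 6 * z + 4 * A 5 6^2 + (32/3) * A 6 6 * c - 8 * A 6 6 * w + 4 * A 6 6^2 - 2 * B 5 6 * C 4 4 + C 3 4 * C 5 6 - C 3 4 * C 6 5 + 2 * C 3 4^2 + 2 * C 4 4 * C 6 6 + 2 * C 4 4^2 - (32/3) * c * w + (16/3) * c^2 + 4 * w^2 + 4 * z^2 = 0" using jbc_34 unfolding s_B33 s_B44 s_B34 s_B35 s_B54 s_C33 s_C64 s_C54 s_B36 s_B64 s_C35 s_C36 by algebra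
      have q_jac_35: "A 3 4 * A 4 3 + 2 * A 3 4 * A 6 5 - A 3 4 * z - A 4 3 * z - 2 * A 4 4 * A 6 6 - A 4 4 * c + 2 * A 4 4 * w + A 4 4^2 + (1/2) * A 5 4 * C 3 4 + (1/2) * A 5 4 * C 6 5 + A 5 6 * A 6 5 + A 5 6 * z - (1/2) * A 6 4 * C 4 4 + (1/2) * A 6 4 * C 6 6 + A 6 5 * z + A 6 6 * c - 2 * A 6 6 * w + A 6 6^2 - c * w + w^2 + z^2 = 0" using jac_35 unfolding s_B35 s_C33 s_C55 s_A33 s_A36 s_C45 s_C35 s_A35 s_C36 s_A55 s_A45 by algebra
      have q_jab_36: "- A 3 4 * A 4 3 + 2 * A 3 4 * A 5 6 - 2 * A 3 4 * A 6 5 + 3 * A 3 4 * z + 2 * A 3 4^2 - 2 * A 4 3 * A 5 6 - A 4 3 * z + 2 * A 4 4 * A 6 6 + (13/3) * A 4 4 * c - 2 * A 4 4 * w + A 4 4^2 - (1/2) * A 5 4 * C 3 4 - (1/2) * A 5 4 * C 5 6 + (1/4) * A 5 4^2 - A 5 6 * A 6 5 + 3 * A 5 6 * z + 2 * A 5 6^2 - A 6 4 * B 5 6 + (1/2) * A 6 4 * C 4 4 + (1/2) * A 6 4 * C 6 6 - A 6 5 * z + (13/3) * A 6 6 * c - 2 * A 6 6 * w + A 6 6^2 - (13/3) * c * w + (40/9) * c^2 + w^2 + z^2 = 0" using jab_36 unfolding s_B33 s_B34 s_B35 s_B46 s_y s_A33 s_B66 s_x s_A36 s_B36 s_A35 s_C36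 s_A46 by algebra
      have q_jbc_43: "4 * A 3 4 * A 4 3 + 4 * A 3 4 * A 6 5 - 4 * A 3 4 * z - 4 * A 4 3 * A 6 5 + 4 * A 4 3 * z + (4/3) * A 4 4 * c + 4 * A 4 4^2 + (1/2) * A 5 4 * C 3 4 + (1/2) * A 5 4 * C 5 6 - (1/2) * A 5 4 * C 6 5 - A 6 4 * C 4 4 + 8 * A 6 5 * z - 4 * A 6 5^2 - (16/3) * A 6 6 * c - 8 * A 6 6 * w - 4 * A 6 6^2 - 2 * B 5 6 * C 4 4 - 3 * C 3 4 * C 5 6 + 3 * C 3 4 * C 6 5 - 2 * C 3 4^2 + 2 * C 4 4 * C 6 6 - 2 * C 4 4^2 + 2 * C 5 6 * C 6 5 - C 5 6^2 - C 6 5^2 - (16/3) * c * w - (8/3) * c^2 - 4 * w^2 - 4 * z^2 = 0" using jbc_43 unfolding s_B53 s_B43 s_B33 s_B44 s_B63 s_B46 s_C33 s_C63 s_C53 s_C43 s_B45 s_C45 s_C46 by algebra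
      have q_jab_45: "- A 3 4 * A 4 3 - 2 * A 3 4 * A 6 5 + A 3 4 * z - 2 * A 4 3 * A 5 6 + 2 * A 4 3 * A 6 5 - 3 * A 4 3 * z + 2 * A 4 3^2 + 2 * A 4 4 * A 6 6 + (5/3) * A 4 4 * c + 2 * A 4 4 * w + A 4 4^2 - (1/2) * A 5 4 * C 3 4 - (1/2) * A 5 4 * C 5 6 + (1/4) * A 5 4^2 - A 5 6 * A 6 5 + A 5 6 * z + A 6 4 * B 5 6 + (1/2) * A 6 4 * C 4 4 - (3/2) * A 6 4 * C 6 6 + (1/2) * A 6 4^2 - 3 * A 6 5 * z + 2 * A 6 5^2 + (5/3) * A 6 6 * c + 2 * A 6 6 * w + A 6 6^2 + (5/3) * c * w + (4/9) * c^2 + w^2 + z^2 = 0" using jab_45 unfolding s_B43 s_B44 s_B35 s_B46 s_y s_B55 s_B45 s_B65 s_x s_C45 s_A35 s_A55 s_A45 s_A46 by algebra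
      have q_jac_46: "- A 3 4 * A 4 3 - A 3 4 * z - 2 * A 4 3 * A 5 6 - A 4 3 * z + 2 * A 4 4 * A 6 6 + A 4 4 * c + 2 * A 4 4 * w - A 4 4^2 - (1/2) * A 5 4 * C 3 4 - A 5 4 * C 5 6 + (1/2) * A 5 4 * C 6 5 - A 5 6 * A 6 5 + A 5 6 * z + (1/2) * A 6 4 * C 4 4 - (1/2) * A 6 4 * C 6 6 + A 6 5 * z - A 6 6 * c - 2 * A 6 6 * w - A 6 6^2 - c * w - w^2 - z^2 = 0" using jac_46 unfolding s_B46 s_C43 s_A36 s_C45 s_C36 s_C46 s_A45 s_A46 by algebra
      have q_jac_53: "2 * A 3 4 * A 4 3 + 2 * A 3 4 * z + 4 * A 4 3 * A 5 6 + 2 * A 4 3 * z - 4 * A 4 4 * A 6 6 - 2 * A 4 4 * c - 4 * A 4 4 * w + 2 * A 4 4^2 + A 5 4 * C 3 4 + 2 * A 5 4 * C 5 6 - A 5 4 * C 6 5 + 2 * A 5 6 * A 6 5 - 2 * A 5 6 * z - A 6 4 * C 4 4 + A 6 4 * C 6 6 - 2 * A 6 5 * z + 2 * A 6 6 * c + 4 * A 6 6 * w + 2 * A 6 6^2 + 2 * c * w + 2 * w^2 + 2 * z^2 = 0" using jac_53 unfolding s_B53 s_A63 s_C33 s_C63 s_C53 s_C54 s_C55 s_A33 s_A53 s_C43 s_A55 by algebra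
      have q_jbc_56: "4 * A 3 4 * A 5 6 - 4 * A 3 4 * A 6 5 + 8 * A 3 4 * z + 4 * A 3 4^2 + (20/3) * A 4 4 * c - 8 * A 4 4 * w + 4 * A 4 4^2 - (1/2) * A 5 4 * C 5 6 - 4 * A 5 6 * A 6 5 + 4 * A 5 6 * z - 4 * A 6 5 * z - (32/3) * A 6 6 * c - 4 * A 6 6^2 + 2 * B 5 6 * C 6 6 + C 5 6 * C 6 5 + C 5 6^2 - (20/3) * c * w - (10/3) * c^2 + 4 * w^2 + 4 * z^2 = 0" using jbc_56 unfolding s_B53 s_B46 s_B54 s_B55 s_C53 s_C54 s_C55 s_B66 s_B36 s_C36 s_C46 by algebra
      have q_jbc_65: "4 * A 4 3 * A 5 6 - 4 * A 4 3 * A 6 5 + 8 * A 4 3 * z - 4 * A 4 3^2 - (4/3) * A 4 4 * c - 8 * A 4 4 * w - 4 * A 4 4^2 + (1/2) * A 5 4 * C 6 5 + 4 * A 5 6 * A 6 5 - 4 * A 5 6 * z + A 6 4 * C 6 6 + 4 * A 6 5 * z + (16/3) * A 6 6 * c + 4 * A 6 6^2 + 2 * B 5 6 * C 6 6 - C 5 6 * C 6 5 - C 6 5^2 - 4 * C 6 6^2 - (4/3) * c * w + (2/3) * c^2 - 4 * w^2 - 4 * z^2 = 0" using jbc_65 unfolding s_B35 s_B63 s_B55 s_C63 s_C64 s_C55 s_B45 s_B66 s_B65 s_B64 s_C45 s_C35 by algebra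
      have fin: "c^2 + (52 * (A 3 4 - (21/26) * A 4 3 + (47/52) * A 5 6 - (47/52) * A 6 5 + (47/26) * z)^2 + (235/13) * (A 4 3 - (1/2) * A 5 6 + (1/2) * A 6 5 - z)^2 + 20 * (A 4 4 + (1/2) * c)^2 + (15/4) * (A 5 4 - (7/5) * C 3 4 - (79/60) * C 5 6 + (1/12) * C 6 5)^2 + 10 * (A 5 6 + A 6 5)^2 + (15/4) * (A 6 4 + (7/5) * C 4 4 - (37/30) * C 6 6)^2 + 40 * (A 6 6 + c)^2 + (693/20) * (C 3 4 + (161/396) * C 5 6 - (235/396) * C 6 5)^2 + (693/20) * (C 4 4 + (37/198) * C 6 6)^2 + (5957/792) * (C 5 6 + C 6 5)^2 + (5957/198) * (C 6 6)^2 + 188 * (- (1/3) * c + w)^2 + (151/9) * (c)^2) = 0"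
      proof -
        have "c^2 + (52 * (A 3 4 - (21/26) * A 4 3 + (47/52) * A 5 6 - (47/52) * A 6 5 + (47/26) * z)^2 + (235/13) * (A 4 3 - (1/2) * A 5 6 + (1/2) * A 6 5 - z)^2 + 20 * (A 4 4 + (1/2) * c)^2 + (15/4) * (A 5 4 - (7/5) * C 3 4 - (79/60) * C 5 6 + (1/12) * C 6 5)^2 + 10 * (A 5 6 + A 6 5)^2 + (15/4) * (A 6 4 + (7/5) * C 4 4 - (37/30) * C 6 6)^2 + 40 * (A 6 6 + c)^2 + (693/20) * (C 3 4 + (161/396) * C 5 6 - (235/396) * C 6 5)^2 + (693/20) * (C 4 4 + (37/198) * C 6 6)^2 + (5957/792) * (C 5 6 + C 6 5)^2 + (5957/198) * (C 6 6)^2 + 188 * (- (1/3) * c + w)^2 + (151/9) * (c)^2) = - ((-21/2) * (- 4 * A 3 4 * A 4 3 + 4 * A 3 4 * A 5 6 + 4 * A 3 4 * z - 4 * A 4 3 * A 5 6 - 4 * A 4 3 * z - (20/3) * A 4 4 * c - 4 * A 4 4^2 - (1/2) * A 5 4 * C 3 4 + 8 * A 5 6 * z + 4 * A 5 6^2 + (32/3) * A 6 6 * c - 8 * A 6 6 * w + 4 * A 6 6^2 - 2 * B 5 6 * C 4 4 + C 3 4 * C 5 6 - C 3 4 * C 6 5 + 2 * C 3 4^2 + 2 * C 4 4 * C 6 6 + 2 * C 4 4^2 - (32/3) * c * w + (16/3) * c^2 + 4 * w^2 + 4 * z^2) + (-15/2) * (A 3 4 * A 4 3 + 2 * A 3 4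 * A 6 5 - A 3 4 * z - A 4 3 * z - 2 * A 4 4 * A 6 6 - A 4 4 * c + 2 * A 4 4 * w + A 4 4^2 + (1/2) * A 5 4 * C 3 4 + (1/2) * A 5 4 * C 6 5 + A 5 6 * A 6 5 + A 5 6 * z - (1/2) * A 6 4 * C 4 4 + (1/2) * A 6 4 * C 6 6 + A 6 5 * z + A 6 6 * c - 2 * A 6 6 * w + A 6 6^2 - c * w + w^2 + z^2) + (-15/2) * (- A 3 4 * A 4 3 + 2 * A 3 4 * A 5 6 - 2 * A 3 4 * A 6 5 + 3 * A 3 4 * z + 2 * A 3 4^2 - 2 * A 4 3 * A 5 6 - A 4 3 * z + 2 * A 4 4 * A 6 6 + (13/3) * A 4 4 * c - 2 * A 4 4 * w + A 4 4^2 - (1/2) * A 5 4 * C 3 4 - (1/2) * A 5 4 * C 5 6 + (1/4) * A 5 4^2 - A 5 6 * A 6 5 + 3 * A 5 6 * z + 2 * A 5 6^2 - A 6 4 * B 5 6 + (1/2) * A 6 4 * C 4 4 + (1/2) * A 6 4 * C 6 6 - A 6 5 * z + (13/3) * A 6 6 * c - 2 * A 6 6 * w + A 6 6^2 - (13/3) * c * w + (40/9) * c^2 + w^2 + z^2) + (21/2) * (4 * A 3 4 * A 4 3 + 4 * A 3 4 * A 6 5 - 4 * A 3 4 * z - 4 * A 4 3 * A 6 5 + 4 * A 4 3 * z + (4/3) * A 4 4 * c + 4 * A 4 4^2 + (1/2) * A 5 4 * C 3 4 + (1/2) * A 5 4 * C 5 6 - (1/2) * A 5 4 * C 6 5 -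 A 6 4 * C 4 4 + 8 * A 6 5 * z - 4 * A 6 5^2 - (16/3) * A 6 6 * c - 8 * A 6 6 * w - 4 * A 6 6^2 - 2 * B 5 6 * C 4 4 - 3 * C 3 4 * C 5 6 + 3 * C 3 4 * C 6 5 - 2 * C 3 4^2 + 2 * C 4 4 * C 6 6 - 2 * C 4 4^2 + 2 * C 5 6 * C 6 5 - C 5 6^2 - C 6 5^2 - (16/3) * c * w - (8/3) * c^2 - 4 * w^2 - 4 * z^2) + (-15/2) * (- A 3 4 * A 4 3 - 2 * A 3 4 * A 6 5 + A 3 4 * z - 2 * A 4 3 * A 5 6 + 2 * A 4 3 * A 6 5 - 3 * A 4 3 * z + 2 * A 4 3^2 + 2 * A 4 4 * A 6 6 + (5/3) * A 4 4 * c + 2 * A 4 4 * w + A 4 4^2 - (1/2) * A 5 4 * C 3 4 - (1/2) * A 5 4 * C 5 6 + (1/4) * A 5 4^2 - A 5 6 * A 6 5 + A 5 6 * z + A 6 4 * B 5 6 + (1/2) * A 6 4 * C 4 4 - (3/2) * A 6 4 * C 6 6 + (1/2) * A 6 4^2 - 3 * A 6 5 * z + 2 * A 6 5^2 + (5/3) * A 6 6 * c + 2 * A 6 6 * w + A 6 6^2 + (5/3) * c * w + (4/9) * c^2 + w^2 + z^2) + (3/2) * (- A 3 4 * A 4 3 - A 3 4 * z - 2 * A 4 3 * A 5 6 - A 4 3 * z + 2 * A 4 4 * A 6 6 + A 4 4 * c + 2 * A 4 4 * w - A 4 4^2 - (1/2) * A 5 4 * C 3 4 - A 5 4 * C 5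 6 + (1/2) * A 5 4 * C 6 5 - A 5 6 * A 6 5 + A 5 6 * z + (1/2) * A 6 4 * C 4 4 - (1/2) * A 6 4 * C 6 6 + A 6 5 * z - A 6 6 * c - 2 * A 6 6 * w - A 6 6^2 - c * w - w^2 - z^2) + -3 * (2 * A 3 4 * A 4 3 + 2 * A 3 4 * z + 4 * A 4 3 * A 5 6 + 2 * A 4 3 * z - 4 * A 4 4 * A 6 6 - 2 * A 4 4 * c - 4 * A 4 4 * w + 2 * A 4 4^2 + A 5 4 * C 3 4 + 2 * A 5 4 * C 5 6 - A 5 4 * C 6 5 + 2 * A 5 6 * A 6 5 - 2 * A 5 6 * z - A 6 4 * C 4 4 + A 6 4 * C 6 6 - 2 * A 6 5 * z + 2 * A 6 6 * c + 4 * A 6 6 * w + 2 * A 6 6^2 + 2 * c * w + 2 * w^2 + 2 * z^2) + (-37/4) * (4 * A 3 4 * A 5 6 - 4 * A 3 4 * A 6 5 + 8 * A 3 4 * z + 4 * A 3 4^2 + (20/3) * A 4 4 * c - 8 * A 4 4 * w + 4 * A 4 4^2 - (1/2) * A 5 4 * C 5 6 - 4 * A 5 6 * A 6 5 + 4 * A 5 6 * z - 4 * A 6 5 * z - (32/3) * A 6 6 * c - 4 * A 6 6^2 + 2 * B 5 6 * C 6 6 + C 5 6 * C 6 5 + C 5 6^2 - (20/3) * c * w - (10/3) * c^2 + 4 * w^2 + 4 * z^2) + (37/4) * (4 * A 4 3 * A 5 6 - 4 * A 4 3 * A 6 5 + 8 * A 4 3 * z - 4 * A 4 3^2 - (4/3)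 * A 4 4 * c - 8 * A 4 4 * w - 4 * A 4 4^2 + (1/2) * A 5 4 * C 6 5 + 4 * A 5 6 * A 6 5 - 4 * A 5 6 * z + A 6 4 * C 6 6 + 4 * A 6 5 * z + (16/3) * A 6 6 * c + 4 * A 6 6^2 + 2 * B 5 6 * C 6 6 - C 5 6 * C 6 5 - C 6 5^2 - 4 * C 6 6^2 - (4/3) * c * w + (2/3) * c^2 - 4 * w^2 - 4 * z^2))" by algebra
        also have "\<dots> = 0" by (simp only: q_jbc_34 q_jac_35 q_jab_36 q_jbc_43 q_jab_45 q_jac_46 q_jac_53 q_jbc_56 q_jbc_65; simp)
        finally show ?thesis .
      qed
      have "0 \<le> 52 * (A 3 4 - (21/26) * A 4 3 + (47/52) * A 5 6 - (47/52) * A 6 5 + (47/26) * z)^2 + (235/13) * (A 4 3 - (1/2) * A 5 6 + (1/2) * A 6 5 - z)^2 + 20 * (A 4 4 + (1/2) * c)^2 + (15/4) * (A 5 4 - (7/5) * C 3 4 - (79/60) * C 5 6 + (1/12) * C 6 5)^2 + 10 * (A 5 6 + A 6 5)^2 + (15/4) * (A 6 4 + (7/5) * C 4 4 - (37/30) * C 6 6)^2 + 40 * (A 6 6 + c)^2 + (693/20) * (C 3 4 + (161/396) * C 5 6 - (235/396) * C 6 5)^2 + (693/20) * (C 4 4 + (37/198) * C 6 6)^2 + (5957/792) * (C 5 6 + C 6 5)^2 + (5957/198) * (C 6 6)^2 + 188 * (- (1/3) * c + w)^2 + (151/9) * (c)^2" by simp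
      moreover have "0 < c^2" using hc0 by simp
      ultimately show False using fin by linarith
    qed
  qed
  have sq: "a^2 + b^2 + c^2 = 0" using h7 lam0 by simp
  have "0 \<le> a^2" "0 \<le> b^2" "0 \<le> c^2" by simp_all
  then have "a^2 = 0" "b^2 = 0" "c^2 = 0" using sq by linarith+
  then have z0: "a = 0" "b = 0" "c = 0" by simp_all
  show ?thesis unfolding tau z0 by (rule ext) auto
qed

end
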